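(* There exists a functorial tensor product $\otimes$ on the category of finite-dimensional proper convex cones which is self-dual, i.e. $(G\otimes H)^\vee=G^\vee\otimes H^\vee$ for all proper cones $G,H$, and which lies in between the minimal and maximal tensor product: $G\otimes_{\min}H\subseteq G\otimes H\subseteq G\otimes_{\max}H$ for all proper cones $G,H$.
   Context: A proper cone $(G,X)$ is a closed, convex, sharp cone $G$ with nonempty interior in a finite-dimensional real vector space $X$; a linear map $\varphi\colon X_1\to X_2$ is positive from $G_1$ to $G_2$ if $\varphi(G_1)\subseteq G_2$. The dual cone is $G^\vee=\{\ell\in X'\mid\ell(G)\subseteq[0,\infty)\}$. For proper cones $G\subseteq X$, $H\subseteq Y$: $G\otimes_{\min}H$ is the convex cone in $X\otimes Y$ generated by $\{g\otimes h\mid g\in G,h\in H\}$, and $G\otimes_{\max}H=\{a\in X\otimes Y\mid(\ell\otimes m)(a)\geqslant0\ \forall \ell\in G^\vee,m\in H^\vee\}=(G^\vee\otimes_{\min}H^\vee)^\vee$. A functorial tensor product assigns to every pair of proper cones $G\subseteq X$, $H\subseteq Y$ a proper cone $G\otimes H\subseteq X\otimes Y$ such that $\varphi\otimes\psi$ is positive from $G_1\otimes H_1$ to $G_2\otimes H_2$ whenever $\varphi$ is positive from $G_1$ to $G_2$ and $\psi$ is positive from $H_1$ to $H_2$. Duals are taken in $(X\otimes Y)'=X'\otimes Y'$. *)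

theory Defs
  imports "HOL-Analysis.Analysis"
begin

text \<open>A space is given by a finite index set I; its vectors are the functions
  'i \<Rightarrow> real vanishing outside I (so the space with I = {..<n} is R^n).
  The tensor product of the spaces indexed by I and J is the space indexed by I \<times> J.
  Linear maps are given by matrices, and the dual space is identified with the space
  itself via the standard pairing (dual basis).\<close>

definition space :: "'i set \<Rightarrow> ('i \<Rightarrow> real) set" where
  "space I = {x. \<forall>i. i \<notin> I \<longrightarrow> x i = 0}"

definition pairing :: "'i set \<Rightarrow> ('i \<Rightarrow> real) \<Rightarrow> ('i \<Rightarrow> real) \<Rightarrow> real" where
  "pairing I l x = (\<Sum>i\<in>I. l i * x i)"

definition proper_cone :: "'i set \<Rightarrow> ('i \<Rightarrow> real) set \<Rightarrow> bool" where
  "proper_cone I G \<longleftrightarrow>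
     G \<subseteq> space I \<and>
     closed G \<and>
     (\<forall>x\<in>G. \<forall>c::real. c \<ge> 0 \<longrightarrow> (\<lambda>i. c * x i) \<in> G) \<and>
     (\<forall>x\<in>G. \<forall>y\<in>G. (\<lambda>i. x i + y i) \<in> G) \<and>
     (\<forall>x\<in>G. (\<lambda>i. - x i) \<in> G \<longrightarrow> x = (\<lambda>i. 0)) \<and>
     (\<exists>x\<in>G. \<exists>e>0. \<forall>y\<in>space I. (\<forall>i\<in>I. \<bar>y i - x i\<bar> < e) \<longrightarrow> y \<in> G)"

definition dual_cone :: "'i set \<Rightarrow> ('i \<Rightarrow> real) set \<Rightarrow> ('i \<Rightarrow> real) set" where
  "dual_cone I G = {l \<in> space I. \<forall>g\<in>G. pairing I l g \<ge> 0}"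

definition tensor :: "('i \<Rightarrow> real) \<Rightarrow> ('j \<Rightarrow> real) \<Rightarrow> ('i \<times> 'j \<Rightarrow> real)" where
  "tensor x y = (\<lambda>(i, j). x i * y j)"

text \<open>Convex cone generated by the elementary tensors g \<otimes> h (nonnegative coefficients are
  absorbed since G, H are cones).\<close>
definition min_tensor :: "('i \<Rightarrow> real) set \<Rightarrow> ('j \<Rightarrow> real) set \<Rightarrow> ('i \<times> 'j \<Rightarrow> real) set" where
  "min_tensor G H = {a. \<exists>(k::nat) g h. (\<forall>t<k. g t \<in> G \<and> h t \<in> H) \<and>
                         a = (\<lambda>p. \<Sum>t<k. tensor (g t) (h t) p)}"

definition max_tensor :: "'i set \<Rightarrow> 'j set \<Rightarrow> ('i \<Rightarrow> real) set \<Rightarrow> ('j \<Rightarrow> real) set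
                          \<Rightarrow> ('i \<times> 'j \<Rightarrow> real) set" where
  "max_tensor I J G H = {a \<in> space (I \<times> J).
      \<forall>l\<in>dual_cone I G. \<forall>m\<in>dual_cone J H. pairing (I \<times> J) (tensor l m) a \<ge> 0}"

definition matapp :: "'i set \<Rightarrow> 'k set \<Rightarrow> ('k \<Rightarrow> 'i \<Rightarrow> real) \<Rightarrow> ('i \<Rightarrow> real) \<Rightarrow> ('k \<Rightarrow> real)" where
  "matapp I K M x = (\<lambda>k. if k \<in> K then (\<Sum>i\<in>I. M k i * x i) else 0)"

definition positive_map :: "'i set \<Rightarrow> 'k set \<Rightarrow> ('k \<Rightarrow> 'i \<Rightarrow> real)
                            \<Rightarrow> ('i \<Rightarrow> real) set \<Rightarrow> ('k \<Rightarrow> real) set \<Rightarrow> bool" where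
  "positive_map I K M G1 G2 \<longleftrightarrow> (\<forall>x\<in>G1. matapp I K M x \<in> G2)"

definition mat_tensor :: "('k \<Rightarrow> 'i \<Rightarrow> real) \<Rightarrow> ('l \<Rightarrow> 'j \<Rightarrow> real)
                          \<Rightarrow> ('k \<times> 'l \<Rightarrow> 'i \<times> 'j \<Rightarrow> real)" where
  "mat_tensor M N = (\<lambda>(k, l) (i, j). M k i * N l j)"

end

theory Submission
  imports Defs
begin

definition tr :: "('k \<Rightarrow> 'i \<Rightarrow> real) \<Rightarrow> ('i \<Rightarrow> 'k \<Rightarrow> real)" where
  "tr M = (\<lambda>i k. M k i)"

definition mmul :: "'k set \<Rightarrow> ('l \<Rightarrow> 'k \<Rightarrow> real) \<Rightarrow> ('k \<Rightarrow> 'i \<Rightarrow> real) \<Rightarrow> ('l \<Rightarrow> 'i \<Rightarrow> real)" where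
  "mmul K N M = (\<lambda>l i. \<Sum>k\<in>K. N l k * M k i)"

definition idm :: "'i \<Rightarrow> 'i \<Rightarrow> real" where
  "idm = (\<lambda>k i. if k = i then 1 else 0)"

definition cvx :: "('i \<Rightarrow> real) set \<Rightarrow> bool" where
  "cvx K \<longleftrightarrow> (\<forall>x\<in>K. \<forall>c::real. c \<ge> 0 \<longrightarrow> (\<lambda>i. c * x i) \<in> K) \<and>
     (\<forall>x\<in>K. \<forall>y\<in>K. (\<lambda>i. x i + y i) \<in> K)"

lemma cvxD: "cvx K \<Longrightarrow> x \<in> K \<Longrightarrow> c \<ge> 0 \<Longrightarrow> (\<lambda>i. c * x i) \<in> K"
  "cvx K \<Longrightarrow> x \<in> K \<Longrightarrow> y \<in> K \<Longrightarrow> (\<lambda>i. x i + y i) \<in> K"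
  by (auto simp: cvx_def)

lemma matapp_comp:
  assumes "finite I" "finite K"
  shows "matapp K L N (matapp I K M x) = matapp I L (mmul K N M) x"
proof
  fix l
  show "matapp K L N (matapp I K M x) l = matapp I L (mmul K N M) x l"
  proof (cases "l \<in> L")
    case True
    have "(\<Sum>k\<in>K. N l k * (if k \<in> K then \<Sum>i\<in>I. M k i * x i else 0))
        = (\<Sum>k\<in>K. \<Sum>i\<in>I. N l k * M k i * x i)"
      by (auto intro!: sum.cong simp: sum_distrib_left mult.assoc)
    also have "\<dots> = (\<Sum>i\<in>I. \<Sum>k\<in>K. N l k * M k i * x i)"
      by (rule sum.swap)
    also have "\<dots> = (\<Sum>i\<in>I. (\<Sum>k\<in>K. N l k * M k i) * x i)"
      by (simp add: sum_distrib_right)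
    finally show ?thesis using True by (simp add: matapp_def mmul_def)
  qed (simp add: matapp_def)
qed

lemma pairing_adj:
  "pairing K w (matapp I K M x) = pairing I (matapp K I (tr M) w) x"
proof -
  have "pairing K w (matapp I K M x) = (\<Sum>k\<in>K. \<Sum>i\<in>I. w k * M k i * x i)"
    by (auto simp: pairing_def matapp_def sum_distrib_left mult.assoc intro!: sum.cong)
  also have "\<dots> = (\<Sum>i\<in>I. \<Sum>k\<in>K. w k * M k i * x i)"
    by (rule sum.swap)
  also have "\<dots> = pairing I (matapp K I (tr M) w) x"
    by (auto simp: pairing_def matapp_def tr_def sum_distrib_right sum_distrib_left ac_simps intro!: sum.cong)
  finally show ?thesis .
qed

lemma pairing_comm: "pairing I a b = pairing I b a"
  by (simp add: pairing_def mult.commute)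

lemma matapp_space: "matapp I K M x \<in> space K"
  by (simp add: matapp_def space_def)

lemma positive_comp:
  assumes "finite I" "finite K"
    and "positive_map I K M G1 G2" "positive_map K L N G2 G3"
  shows "positive_map I L (mmul K N M) G1 G3"
  using assms by (auto simp: positive_map_def matapp_comp[symmetric])

lemma positive_tr:
  assumes "positive_map I K M G1 G2"
  shows "positive_map K I (tr M) (dual_cone K G2) (dual_cone I G1)"
  unfolding positive_map_def
proof
  fix l assume l: "l \<in> dual_cone K G2"
  have "0 \<le> pairing I (matapp K I (tr M) l) g" if "g \<in> G1" for g
  proof -
    from that have "matapp I K M g \<in> G2" using assms by (auto simp: positive_map_def)
    then have "0 \<le> pairing K l (matapp I K M g)" using l by (auto simp: dual_cone_def)
    then show ?thesis by (simp add: pairing_adj)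
  qed
  then show "matapp K I (tr M) l \<in> dual_cone I G1"
    by (auto simp: dual_cone_def matapp_space)
qed

lemma space_eqI: "x \<in> space I \<Longrightarrow> y \<in> space I \<Longrightarrow> (\<And>i. i \<in> I \<Longrightarrow> x i = y i) \<Longrightarrow> x = y"
  by (auto simp: space_def fun_eq_iff) (metis)

lemma matapp_idm: "finite I \<Longrightarrow> x \<in> space I \<Longrightarrow> matapp I I idm x = x"
proof (rule space_eqI[OF matapp_space])
  fix i assume "finite I" "x \<in> space I" "i \<in> I"
  have "(\<Sum>ia\<in>I. idm i ia * x ia) = (\<Sum>ia\<in>I. if i = ia then x ia else 0)"
    by (rule sum.cong) (auto simp: idm_def)
  then show "matapp I I idm x i = x i"
    using \<open>i \<in> I\<close> \<open>finite I\<close> by (simp add: matapp_def)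
qed

lemma positive_idm: "finite I \<Longrightarrow> G \<subseteq> space I \<Longrightarrow> positive_map I I idm G G"
  by (auto simp: positive_map_def matapp_idm)

lemma subset_dual_dual: "G \<subseteq> space I \<Longrightarrow> G \<subseteq> dual_cone I (dual_cone I G)"
  by (auto simp: dual_cone_def pairing_comm)

lemma pairing_scale: "pairing I (\<lambda>i. c * x i) y = c * pairing I x y"
  "pairing I y (\<lambda>i. c * x i) = c * pairing I y x"
  by (simp_all add: pairing_def sum_distrib_left ac_simps)

lemma pairing_add: "pairing I (\<lambda>i. x i + z i) y = pairing I x y + pairing I z y"
  "pairing I y (\<lambda>i. x i + z i) = pairing I y x + pairing I y z"
  by (simp_all add: pairing_def sum.distrib distrib_left distrib_right)

lemma dual_cvx: "cvx (dual_cone I G)"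
  by (auto simp: cvx_def dual_cone_def space_def pairing_scale pairing_add)

lemma dual_space: "dual_cone I G \<subseteq> space I"
  by (auto simp: dual_cone_def)

lemma zero_space: "(\<lambda>i. 0) \<in> space I"
  by (simp add: space_def)

lemma zero_dual: "(\<lambda>i. 0) \<in> dual_cone I G"
  by (simp add: dual_cone_def space_def pairing_def)

lemma tensor_space: "x \<in> space I \<Longrightarrow> y \<in> space J \<Longrightarrow> tensor x y \<in> space (I \<times> J)"
  by (auto simp: space_def tensor_def)

lemma pairing_tensor:
  "pairing (I \<times> J) (tensor l m) (tensor g h) = pairing I l g * pairing J m h"
proof -
  have "pairing (I \<times> J) (tensor l m) (tensor g h) = (\<Sum>(i,j)\<in>I \<times> J. (l i * g i) * (m j * h j))"
    unfolding pairing_def tensor_def by (rule sum.cong) (auto simp: ac_simps)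
  also have "\<dots> = (\<Sum>i\<in>I. \<Sum>j\<in>J. (l i * g i) * (m j * h j))"
    by (rule sum.cartesian_product[symmetric])
  also have "\<dots> = pairing I l g * pairing J m h"
    by (simp add: pairing_def sum_product)
  finally show ?thesis .
qed

lemma sum_times_cart:
  fixes f g :: "_ \<Rightarrow> real"
  shows "(\<Sum>p\<in>A \<times> B. f (fst p) * g (snd p)) = (\<Sum>a\<in>A. f a) * (\<Sum>b\<in>B. g b)"
proof -
  have "sum f A * sum g B = (\<Sum>a\<in>A. \<Sum>b\<in>B. f a * g b)" by (rule sum_product)
  also have "\<dots> = (\<Sum>(a,b)\<in>A \<times> B. f a * g b)" by (rule sum.cartesian_product)
  finally show ?thesis by (simp add: split_def)
qed

lemma matapp_tensor:
  "matapp (I \<times> J) (K \<times> L) (mat_tensor M N) (tensor g h) = tensor (matapp I K M g) (matapp J L N h)"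
proof -
  have "(\<Sum>p\<in>I \<times> J. mat_tensor M N (k, l) p * tensor g h p) =
        (\<Sum>i\<in>I. M k i * g i) * (\<Sum>j\<in>J. N l j * h j)" for k l
  proof -
    have "(\<Sum>p\<in>I \<times> J. mat_tensor M N (k, l) p * tensor g h p) =
          (\<Sum>p\<in>I \<times> J. (M k (fst p) * g (fst p)) * (N l (snd p) * h (snd p)))"
      by (rule sum.cong) (auto simp: mat_tensor_def tensor_def split_def ac_simps)
    then show ?thesis using sum_times_cart[of "\<lambda>i. M k i * g i" "\<lambda>j. N l j * h j" I J] by simp
  qed
  then show ?thesis
    by (auto simp: fun_eq_iff matapp_def tensor_def)
qed

lemma tr_mat_tensor: "tr (mat_tensor M N) = mat_tensor (tr M) (tr N)"
  by (auto simp: tr_def mat_tensor_def fun_eq_iff)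

lemma mmul_mat_tensor:
  "mmul (K \<times> L) (mat_tensor A B) (mat_tensor M N) = mat_tensor (mmul K A M) (mmul L B N)"
proof -
  have "(\<Sum>p\<in>K \<times> L. mat_tensor A B (a, b) p * mat_tensor M N p (c, d)) =
        (\<Sum>k\<in>K. A a k * M k c) * (\<Sum>l\<in>L. B b l * N l d)" for a b c d
  proof -
    have "(\<Sum>p\<in>K \<times> L. mat_tensor A B (a, b) p * mat_tensor M N p (c, d)) =
          (\<Sum>p\<in>K \<times> L. (A a (fst p) * M (fst p) c) * (B b (snd p) * N (snd p) d))"
      by (rule sum.cong) (auto simp: mat_tensor_def split_def ac_simps)
    then show ?thesis using sum_times_cart[of "\<lambda>k. A a k * M k c" "\<lambda>l. B b l * N l d" K L] by simp
  qed
  then show ?thesis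
    by (auto simp: fun_eq_iff mmul_def mat_tensor_def)
qed

lemma tensor_in_min: "g \<in> G \<Longrightarrow> h \<in> H \<Longrightarrow> tensor g h \<in> min_tensor G H"
  unfolding min_tensor_def
  by (rule CollectI, rule exI[of _ 1], rule exI[of _ "\<lambda>_. g"], rule exI[of _ "\<lambda>_. h"]) auto


lemma cont_coord [continuous_intros]: "continuous_on S (\<lambda>x::'a \<Rightarrow> real. x i)"
  by (rule continuous_on_subset[OF continuous_on_product_coordinates]) simp

lemma cont_pairing_r [continuous_intros]: "continuous_on S (\<lambda>x. pairing I l x)"
  unfolding pairing_def by (intro continuous_intros)

lemma cont_pairing_l [continuous_intros]: "continuous_on S (\<lambda>x. pairing I x l)"
  unfolding pairing_def by (intro continuous_intros)

lemma cont_matapp [continuous_intros]: "continuous_on S (\<lambda>x. matapp I K M x)"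
  unfolding matapp_def
proof (intro continuous_on_coordinatewise_then_product)
  fix i show "continuous_on S (\<lambda>x. if i \<in> K then \<Sum>ia\<in>I. M i ia * x ia else 0)"
    by (cases "i \<in> K") (auto intro!: continuous_intros)
qed

lemma closed_space: "closed (space I)"
proof -
  have "space I = (\<Inter>i\<in>-I. {x. x i = 0})" by (auto simp: space_def)
  moreover have "closed {x::'a \<Rightarrow> real. x i = 0}" for i
    by (intro closed_Collect_eq continuous_intros)
  ultimately show ?thesis by auto
qed

lemma closed_dual: "closed (dual_cone I G)"
proof -
  have "dual_cone I G = space I \<inter> (\<Inter>g\<in>G. {l. 0 \<le> pairing I l g})" by (auto simp: dual_cone_def)
  moreover have "closed {l. 0 \<le> pairing I l g}" for g
    by (intro closed_Collect_le continuous_intros)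
  ultimately show ?thesis using closed_space by (auto intro!: closed_Int closed_INT)
qed

lemma compact_box: "compact {x::'i\<Rightarrow>real. \<forall>i. (i \<in> I \<longrightarrow> \<bar>x i\<bar> \<le> R i) \<and> (i \<notin> I \<longrightarrow> x i = 0)}"
proof -
  have eq: "{x::'i\<Rightarrow>real. \<forall>i. (i \<in> I \<longrightarrow> \<bar>x i\<bar> \<le> R i) \<and> (i \<notin> I \<longrightarrow> x i = 0)}
      = PiE UNIV (\<lambda>i. if i \<in> I then {-R i..R i} else {0})"
    by (auto simp: PiE_def Pi_def abs_le_iff)
  have "compactin (product_topology (\<lambda>i. euclidean) UNIV) (PiE UNIV (\<lambda>i. if i \<in> I then {-R i..R i} else {0::real}))"
    by (subst compactin_PiE) auto
  then show ?thesis by (simp add: euclidean_product_topology eq)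
qed

lemma cvx_zero: "cvx K \<Longrightarrow> K \<noteq> {} \<Longrightarrow> (\<lambda>i. 0) \<in> K"
  using cvxD(1)[of K _ 0] by auto

lemma separation:
  assumes fin: "finite I" and Ksp: "K \<subseteq> space I" and Kcl: "closed K" and Kc: "cvx K"
    and Kne: "K \<noteq> {}" and zsp: "z \<in> space I" and zK: "z \<notin> K"
  shows "\<exists>l\<in>dual_cone I K. pairing I l z < 0"
proof -
  define f where "f k = (\<Sum>i\<in>I. (z i - k i)^2)" for k
  define s where "s = f (\<lambda>i. 0)"
  have K0: "(\<lambda>i. 0) \<in> K" using cvx_zero[OF Kc Kne] .
  define Box where "Box = {x::'a\<Rightarrow>real. \<forall>i. (i \<in> I \<longrightarrow> \<bar>x i\<bar> \<le> \<bar>z i\<bar> + sqrt s) \<and> (i \<notin> I \<longrightarrow> x i = 0)}"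
  define D where "D = K \<inter> {k. f k \<le> s}"
  have contf: "continuous_on S f" for S unfolding f_def by (intro continuous_intros)
  have "D \<subseteq> Box"
  proof
    fix k assume k: "k \<in> D"
    then have ksp: "k \<in> space I" using Ksp by (auto simp: D_def)
    have "\<bar>k i\<bar> \<le> \<bar>z i\<bar> + sqrt s" if i: "i \<in> I" for i
    proof -
      have "(z i - k i)^2 \<le> f k" unfolding f_def
        by (rule member_le_sum[OF i]) (auto simp: fin)
      also have "\<dots> \<le> s" using k by (auto simp: D_def)
      finally have "sqrt ((z i - k i)^2) \<le> sqrt s" by (rule real_sqrt_le_mono)
      then have "\<bar>z i - k i\<bar> \<le> sqrt s" by simp
      then show ?thesis by linarith
    qed
    then show "k \<in> Box" using ksp by (auto simp: Box_def space_def)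
  qed
  then have "D = Box \<inter> (K \<inter> {k. f k \<le> s})" by (auto simp: D_def)
  moreover have "closed (K \<inter> {k. f k \<le> s})"
    by (intro closed_Int Kcl closed_Collect_le contf continuous_on_const)
  ultimately have cD: "compact D" using compact_box[of I "\<lambda>i. \<bar>z i\<bar> + sqrt s"]
    by (simp add: Box_def compact_Int_closed)
  have "(\<lambda>i. 0) \<in> D" using K0 by (simp add: D_def s_def)
  then obtain y where yD: "y \<in> D" and ymin: "\<And>k. k \<in> D \<Longrightarrow> f y \<le> f k"
    using continuous_attains_inf[OF cD _ contf] by blast
  have yK: "y \<in> K" and ys: "f y \<le> s" using yD by (auto simp: D_def)
  have ysp: "y \<in> space I" using yK Ksp by auto
  define a where "a k = (\<Sum>i\<in>I. (z i - y i) * (k i - y i))" for k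
  have var: "a k \<le> 0" if kK: "k \<in> K" for k
  proof -
    define b where "b = (\<Sum>i\<in>I. (k i - y i)^2)"
    have b0: "b \<ge> 0" unfolding b_def by (intro sum_nonneg) auto
    have step: "2 * a k \<le> t * b" if t: "0 < t" "t \<le> 1" for t
    proof -
      define kt where "kt = (\<lambda>i. (1 - t) * y i + t * k i)"
      have "kt \<in> K" unfolding kt_def
        using t by (intro cvxD(2)[OF Kc] cvxD(1)[OF Kc] yK kK) auto
      then have le: "f y \<le> f kt"
      proof (cases "f kt \<le> s")
        case True then show ?thesis using \<open>kt \<in> K\<close> by (intro ymin) (auto simp: D_def)
      next
        case False then show ?thesis using ys by simp
      qed
      have "f kt = f y - 2 * t * a k + t^2 * b"
      proof -
        have "\<And>i. (z i - kt i)^2 = (z i - y i)^2 - 2 * t * ((z i - y i) * (k i - y i)) + t^2 * (k i - y i)^2"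
          by (simp add: kt_def power2_eq_square algebra_simps)
        then show ?thesis
          by (simp add: f_def a_def b_def sum.distrib sum_subtractf sum_distrib_left mult.assoc)
      qed
      then have "2 * t * a k \<le> t^2 * b" using le by simp
      then have "t * (2 * a k) \<le> t * (t * b)" by (simp add: power2_eq_square algebra_simps)
      then show ?thesis using t by simp
    qed
    show ?thesis
    proof (rule ccontr)
      assume "\<not> a k \<le> 0"
      then have ap: "a k > 0" by simp
      define t where "t = min 1 (a k / (b + 1))"
      have t0: "0 < t" "t \<le> 1" using ap b0 by (auto simp: t_def)
      have "t * b \<le> a k / (b + 1) * b" using b0 by (intro mult_right_mono) (auto simp: t_def)
      also have "\<dots> < a k" using ap b0 by (simp add: field_simps)
      finally show False using step[OF t0] ap by simp
    qed
  qed
  have a0: "a (\<lambda>i. 0) \<le> 0" using var[OF K0] .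
  have "(\<lambda>i. 2 * y i) \<in> K" using cvxD(1)[OF Kc yK, of 2] by simp
  then have a2: "a (\<lambda>i. 2 * y i) \<le> 0" by (rule var)
  have yy: "(\<Sum>i\<in>I. (z i - y i) * y i) = 0"
  proof -
    have "a (\<lambda>i. 0) = - (\<Sum>i\<in>I. (z i - y i) * y i)" by (simp add: a_def sum_negf)
    moreover have "a (\<lambda>i. 2 * y i) = (\<Sum>i\<in>I. (z i - y i) * y i)" by (simp add: a_def)
    ultimately show ?thesis using a0 a2 by simp
  qed
  define l where "l = (\<lambda>i. y i - z i)"
  have lsp: "l \<in> space I" using ysp zsp by (auto simp: l_def space_def)
  have "0 \<le> pairing I l k" if "k \<in> K" for k
  proof -
    have "a k = (\<Sum>i\<in>I. (z i - y i) * k i) - (\<Sum>i\<in>I. (z i - y i) * y i)"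
      unfolding a_def sum_subtractf[symmetric] by (rule sum.cong) (auto simp: algebra_simps)
    then have "(\<Sum>i\<in>I. (z i - y i) * k i) \<le> 0" using var[OF that] yy by simp
    moreover have "pairing I l k = - (\<Sum>i\<in>I. (z i - y i) * k i)"
      by (simp add: pairing_def l_def sum_negf[symmetric] algebra_simps)
    ultimately show ?thesis by simp
  qed
  then have ldual: "l \<in> dual_cone I K" using lsp by (auto simp: dual_cone_def)
  have fy: "f y > 0"
  proof (rule ccontr)
    assume "\<not> f y > 0"
    moreover have "f y \<ge> 0" unfolding f_def by (intro sum_nonneg) auto
    ultimately have "f y = 0" by simp
    then have "\<forall>i\<in>I. (z i - y i)^2 = 0" unfolding f_def using fin
      by (subst (asm) sum_nonneg_eq_0_iff) auto
    then have "y = z" using ysp zsp by (intro space_eqI) auto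
    then show False using yK zK by simp
  qed
  have "pairing I l z = (\<Sum>i\<in>I. - ((z i - y i)^2) - (z i - y i) * y i)"
    unfolding pairing_def l_def by (rule sum.cong) (auto simp: power2_eq_square algebra_simps)
  also have "\<dots> = - f y - (\<Sum>i\<in>I. (z i - y i) * y i)"
    by (simp add: f_def sum_subtractf sum_negf)
  finally have "pairing I l z < 0" using yy fy by simp
  then show ?thesis using ldual by blast
qed

lemma bipolar:
  assumes "finite I" "K \<subseteq> space I" "closed K" "cvx K" "K \<noteq> {}"
  shows "dual_cone I (dual_cone I K) = K"
proof
  show "K \<subseteq> dual_cone I (dual_cone I K)" using subset_dual_dual[OF assms(2)] .
  show "dual_cone I (dual_cone I K) \<subseteq> K"
  proof
    fix z assume z: "z \<in> dual_cone I (dual_cone I K)"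
    show "z \<in> K"
    proof (rule ccontr)
      assume "z \<notin> K"
      moreover have "z \<in> space I" using z by (auto simp: dual_cone_def)
      ultimately obtain l where "l \<in> dual_cone I K" "pairing I l z < 0"
        using separation[OF assms] by blast
      then show False using z by (auto simp: dual_cone_def pairing_comm)
    qed
  qed
qed


lemma proper_basic:
  assumes "proper_cone I G"
  shows "G \<subseteq> space I" "closed G" "cvx G" "G \<noteq> {}"
  using assms by (auto simp: proper_cone_def cvx_def)

lemma proper_sharp:
  "proper_cone I G \<Longrightarrow> x \<in> G \<Longrightarrow> (\<lambda>i. - x i) \<in> G \<Longrightarrow> x = (\<lambda>i. 0)"
  by (auto simp: proper_cone_def)

lemma proper_ball:
  assumes "proper_cone I G"
  shows "\<exists>x\<in>G. \<exists>d>0. \<forall>u\<in>space I. (\<forall>i\<in>I. \<bar>u i\<bar> \<le> d) \<longrightarrow> (\<lambda>i. x i + u i) \<in> G"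
proof -
  obtain x e where x: "x \<in> G" "e > 0"
    and b: "\<And>y. y \<in> space I \<Longrightarrow> (\<forall>i\<in>I. \<bar>y i - x i\<bar> < e) \<Longrightarrow> y \<in> G"
    using assms unfolding proper_cone_def by blast
  have xsp: "x \<in> space I" using x assms by (auto simp: proper_cone_def)
  show ?thesis
  proof (intro bexI[OF _ x(1)] exI[of _ "e/2"] conjI ballI impI)
    show "e / 2 > 0" using x by simp
    fix u assume u: "u \<in> space I" "\<forall>i\<in>I. \<bar>u i\<bar> \<le> e / 2"
    show "(\<lambda>i. x i + u i) \<in> G"
      using u xsp x(2) by (intro b) (auto simp: space_def)
  qed
qed

definition ev :: "'i \<Rightarrow> 'i \<Rightarrow> real" where
  "ev i = (\<lambda>j. if j = i then 1 else 0)"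

lemma ev_space: "i \<in> I \<Longrightarrow> ev i \<in> space I"
  by (auto simp: ev_def space_def)

lemma pairing_ev: "finite I \<Longrightarrow> i \<in> I \<Longrightarrow> pairing I l (ev i) = l i"
proof -
  assume "finite I" "i \<in> I"
  have "pairing I l (ev i) = (\<Sum>j\<in>I. if j = i then l j else 0)"
    unfolding pairing_def ev_def by (rule sum.cong) auto
  then show ?thesis using \<open>finite I\<close> \<open>i \<in> I\<close> by simp
qed

lemma dual_sharp:
  assumes fin: "finite I" and G: "proper_cone I G"
    and l: "l \<in> dual_cone I G" and ml: "(\<lambda>i. - l i) \<in> dual_cone I G"
  shows "l = (\<lambda>i. 0)"
proof -
  obtain x d where x: "x \<in> G" "d > 0"
    and b: "\<And>u. u \<in> space I \<Longrightarrow> (\<forall>i\<in>I. \<bar>u i\<bar> \<le> d) \<Longrightarrow> (\<lambda>i. x i + u i) \<in> G"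
    using proper_ball[OF G] by blast
  have zero: "pairing I l g = 0" if "g \<in> G" for g
  proof -
    have "0 \<le> pairing I l g" using l that by (auto simp: dual_cone_def)
    moreover have "0 \<le> pairing I (\<lambda>i. - l i) g" using ml that by (auto simp: dual_cone_def)
    then have "0 \<le> - pairing I l g" using pairing_scale(1)[of I "-1" l g] by simp
    ultimately show ?thesis by simp
  qed
  have "l i = 0" if i: "i \<in> I" for i
  proof -
    have "(\<lambda>j. d * ev i j) \<in> space I" using ev_space[OF i] by (auto simp: space_def)
    moreover have "\<forall>j\<in>I. \<bar>d * ev i j\<bar> \<le> d" using x by (auto simp: ev_def)
    ultimately have "(\<lambda>j. x j + d * ev i j) \<in> G" by (rule b)
    then have "pairing I l (\<lambda>j. x j + d * ev i j) = 0" by (rule zero)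
    then have "pairing I l x + d * l i = 0"
      by (simp add: pairing_add pairing_scale pairing_ev[OF fin i])
    then show ?thesis using zero[OF x(1)] x(2) by simp
  qed
  moreover have "l \<in> space I" using l by (auto simp: dual_cone_def)
  ultimately show ?thesis by (intro space_eqI) (auto simp: space_def)
qed

definition nrm1 :: "'i set \<Rightarrow> ('i \<Rightarrow> real) \<Rightarrow> real" where
  "nrm1 I x = (\<Sum>i\<in>I. \<bar>x i\<bar>)"

lemma nrm1_nonneg: "nrm1 I x \<ge> 0"
  by (simp add: nrm1_def sum_nonneg)

lemma pairing_bound: "\<bar>pairing I a b\<bar> \<le> c * nrm1 I b" if "\<forall>i\<in>I. \<bar>a i\<bar> \<le> c"
proof -
  have "\<bar>pairing I a b\<bar> \<le> (\<Sum>i\<in>I. \<bar>a i * b i\<bar>)" unfolding pairing_def by (rule sum_abs)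
  also have "\<dots> \<le> (\<Sum>i\<in>I. c * \<bar>b i\<bar>)"
    using that by (intro sum_mono) (auto simp: abs_mult intro: mult_right_mono)
  finally show ?thesis by (simp add: nrm1_def sum_distrib_left)
qed

lemma dual_interior:
  assumes fin: "finite I" and G: "proper_cone I G"
  shows "\<exists>x\<in>dual_cone I G. \<exists>e>0. \<forall>y\<in>space I. (\<forall>i\<in>I. \<bar>y i - x i\<bar> < e) \<longrightarrow> y \<in> dual_cone I G"
proof -
  note Gb = proper_basic[OF G]
  have bip: "dual_cone I (dual_cone I G) = G" using bipolar[OF fin Gb(1,2,3,4)] .
  define S where "S = G \<inter> {g. nrm1 I g = 1}"
  have "S \<subseteq> {x. \<forall>i. (i \<in> I \<longrightarrow> \<bar>x i\<bar> \<le> 1) \<and> (i \<notin> I \<longrightarrow> x i = 0)}"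
  proof
    fix g assume g: "g \<in> S"
    have "\<bar>g i\<bar> \<le> 1" if "i \<in> I" for i
    proof -
      have "\<bar>g i\<bar> \<le> nrm1 I g" unfolding nrm1_def by (rule member_le_sum[OF that]) (auto simp: fin)
      then show ?thesis using g by (simp add: S_def)
    qed
    then show "g \<in> {x. \<forall>i. (i \<in> I \<longrightarrow> \<bar>x i\<bar> \<le> 1) \<and> (i \<notin> I \<longrightarrow> x i = 0)}"
      using g Gb(1) by (auto simp: S_def space_def)
  qed
  then have Seq: "{x. \<forall>i. (i \<in> I \<longrightarrow> \<bar>x i\<bar> \<le> 1) \<and> (i \<notin> I \<longrightarrow> x i = 0)} \<inter> S = S"
    by blast
  have "closed S" unfolding S_def nrm1_def
    by (intro closed_Int Gb(2) closed_Collect_eq continuous_intros)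
  then have "compact ({x. \<forall>i. (i \<in> I \<longrightarrow> \<bar>x i\<bar> \<le> 1) \<and> (i \<notin> I \<longrightarrow> x i = 0)} \<inter> S)"
    by (intro compact_Int_closed compact_box)
  then have cS: "compact S" by (simp only: Seq)
  have cover: "S \<subseteq> (\<Union>l\<in>dual_cone I G. {g. 0 < pairing I l g})"
  proof
    fix g assume g: "g \<in> S"
    show "g \<in> (\<Union>l\<in>dual_cone I G. {g. 0 < pairing I l g})"
    proof (rule ccontr)
      assume "g \<notin> (\<Union>l\<in>dual_cone I G. {g. 0 < pairing I l g})"
      then have le: "\<forall>l\<in>dual_cone I G. pairing I l g \<le> 0" by auto
      have gG: "g \<in> G" using g by (auto simp: S_def)
      have "0 \<le> pairing I (\<lambda>i. - g i) l" if "l \<in> dual_cone I G" for l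
        using le that pairing_scale(2)[of I l "-1" g] pairing_comm[of I "\<lambda>i. - g i" l] by simp
      moreover have "(\<lambda>i. - g i) \<in> space I" using gG Gb(1) by (auto simp: space_def)
      ultimately have "(\<lambda>i. - g i) \<in> dual_cone I (dual_cone I G)"
        by (auto simp: dual_cone_def)
      then have "(\<lambda>i. - g i) \<in> G" using bip by simp
      then have "g = (\<lambda>i. 0)" using proper_sharp[OF G gG] by simp
      then show False using g by (simp add: S_def nrm1_def)
    qed
  qed
  have opn: "\<And>l. l \<in> dual_cone I G \<Longrightarrow> open {g. 0 < pairing I l g}"
    by (intro open_Collect_less continuous_intros)
  obtain C where C: "C \<subseteq> dual_cone I G" "finite C" "S \<subseteq> (\<Union>l\<in>C. {g. 0 < pairing I l g})"
    using compactE_image[OF cS opn cover] by blast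
  define l0 where "l0 = (\<lambda>i. \<Sum>l\<in>C. l i)"
  have pl0: "pairing I l0 g = (\<Sum>l\<in>C. pairing I l g)" for g
    unfolding l0_def pairing_def sum_distrib_right by (rule sum.swap)
  have l0sp: "l0 \<in> space I" unfolding l0_def space_def
  proof (intro CollectI allI impI)
    fix i assume "i \<notin> I"
    then show "(\<Sum>l\<in>C. l i) = 0" using C(1) by (intro sum.neutral) (auto simp: dual_cone_def space_def)
  qed
  have l0d: "l0 \<in> dual_cone I G"
    using l0sp C(1) by (auto simp: dual_cone_def pl0 intro!: sum_nonneg)
  have posS: "0 < pairing I l0 g" if gS: "g \<in> S" for g
  proof -
    obtain l where l: "l \<in> C" "0 < pairing I l g" using C(3) gS by blast
    have "g \<in> G" using gS by (auto simp: S_def)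
    then have nn: "\<forall>l'\<in>C. 0 \<le> pairing I l' g" using C(1) by (auto simp: dual_cone_def)
    show ?thesis unfolding pl0
      by (rule sum_pos2[OF C(2) l(1), of "\<lambda>l. pairing I l g"]) (use l(2) nn in auto)
  qed
  obtain c where c: "c > 0" "\<And>g. g \<in> S \<Longrightarrow> c \<le> pairing I l0 g"
  proof (cases "S = {}")
    case True then show ?thesis using that[of 1] by auto
  next
    case False
    then obtain g0 where "g0 \<in> S" "\<forall>g\<in>S. pairing I l0 g0 \<le> pairing I l0 g"
      using continuous_attains_inf[OF cS False cont_pairing_r] by blast
    then show ?thesis using that[of "pairing I l0 g0"] posS by auto
  qed
  have big: "c * nrm1 I g \<le> pairing I l0 g" if gG: "g \<in> G" for g
  proof (cases "nrm1 I g = 0")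
    case True then show ?thesis using l0d gG by (auto simp: dual_cone_def)
  next
    case False
    then have Np: "nrm1 I g > 0" using nrm1_nonneg[of I g] by simp
    define g' where "g' = (\<lambda>i. (1 / nrm1 I g) * g i)"
    have "g' \<in> G" unfolding g'_def by (rule cvxD(1)[OF Gb(3) gG]) (use Np in simp)
    moreover have "nrm1 I g' = 1"
    proof -
      have "nrm1 I g' = (\<Sum>i\<in>I. (1 / nrm1 I g) * \<bar>g i\<bar>)"
        unfolding nrm1_def g'_def using Np by (intro sum.cong) (auto simp: abs_mult)
      also have "\<dots> = (1 / nrm1 I g) * nrm1 I g" by (simp add: nrm1_def sum_distrib_left)
      finally show ?thesis using Np by simp
    qed
    ultimately have "c \<le> pairing I l0 g'" using c(2) by (auto simp: S_def)
    also have "\<dots> = pairing I l0 g / nrm1 I g" unfolding g'_def pairing_scale by simp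
    finally show ?thesis using Np by (simp add: field_simps)
  qed
  show ?thesis
  proof (intro bexI[OF _ l0d] exI[of _ c] conjI ballI impI)
    show "c > 0" by (rule c)
    fix y assume y: "y \<in> space I" "\<forall>i\<in>I. \<bar>y i - l0 i\<bar> < c"
    have "0 \<le> pairing I y g" if gG: "g \<in> G" for g
    proof -
      have "pairing I y g = pairing I l0 g + pairing I (\<lambda>i. y i - l0 i) g"
        by (simp add: pairing_def algebra_simps sum.distrib[symmetric])
      moreover have "\<bar>pairing I (\<lambda>i. y i - l0 i) g\<bar> \<le> c * nrm1 I g"
        using y(2) by (intro pairing_bound) (auto simp: less_imp_le)
      ultimately show ?thesis using big[OF gG] by linarith
    qed
    then show "y \<in> dual_cone I G" using y(1) by (auto simp: dual_cone_def)
  qed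
qed

lemma dual_proper:
  assumes "finite I" "proper_cone I G"
  shows "proper_cone I (dual_cone I G)"
  unfolding proper_cone_def
proof (intro conjI)
  show "dual_cone I G \<subseteq> space I" by (rule dual_space)
  show "closed (dual_cone I G)" by (rule closed_dual)
  show "\<forall>x\<in>dual_cone I G. \<forall>c::real. c \<ge> 0 \<longrightarrow> (\<lambda>i. c * x i) \<in> dual_cone I G"
    using dual_cvx[of I G] by (auto simp: cvx_def)
  show "\<forall>x\<in>dual_cone I G. \<forall>y\<in>dual_cone I G. (\<lambda>i. x i + y i) \<in> dual_cone I G"
    using dual_cvx[of I G] by (auto simp: cvx_def)
  show "\<forall>x\<in>dual_cone I G. (\<lambda>i. - x i) \<in> dual_cone I G \<longrightarrow> x = (\<lambda>i. 0)"
    using dual_sharp[OF assms] by blast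
  show "\<exists>x\<in>dual_cone I G. \<exists>e>0. \<forall>y\<in>space I. (\<forall>i\<in>I. \<bar>y i - x i\<bar> < e) \<longrightarrow> y \<in> dual_cone I G"
    by (rule dual_interior[OF assms])
qed


definition lsum :: "'q list \<Rightarrow> ('q \<Rightarrow> 'p \<Rightarrow> real) \<Rightarrow> 'p \<Rightarrow> real" where
  "lsum ps f = (\<lambda>p. sum_list (map (\<lambda>q. f q p) ps))"

lemma lsum_Nil: "lsum [] f = (\<lambda>p. 0)" by (simp add: lsum_def)
lemma lsum_Cons: "lsum (q # ps) f = (\<lambda>p. f q p + lsum ps f p)" by (simp add: lsum_def)
lemma lsum_append: "lsum (ps @ qs) f = (\<lambda>p. lsum ps f p + lsum qs f p)" by (simp add: lsum_def)

lemma lsum_space: "(\<And>q. q \<in> set ps \<Longrightarrow> f q \<in> space I) \<Longrightarrow> lsum ps f \<in> space I"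
  by (induction ps) (auto simp: lsum_Nil lsum_Cons space_def)

lemma lsum_scale: "(\<lambda>p. c * lsum ps f p) = lsum ps (\<lambda>q p. c * f q p)"
  by (simp add: lsum_def sum_list_const_mult fun_eq_iff)

lemma lsum_map: "lsum (map g ps) f = lsum ps (\<lambda>q. f (g q))"
  by (simp add: lsum_def o_def)

lemma pairing_zero: "pairing I (\<lambda>p. 0) x = 0" "pairing I x (\<lambda>p. 0) = 0"
  by (simp_all add: pairing_def)

lemma pairing_lsum_l: "pairing I (lsum ps f) x = sum_list (map (\<lambda>q. pairing I (f q) x) ps)"
  by (induction ps) (auto simp: lsum_Nil lsum_Cons pairing_zero pairing_add)

lemma pairing_lsum_r: "pairing I x (lsum ps f) = sum_list (map (\<lambda>q. pairing I x (f q)) ps)"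
  by (induction ps) (auto simp: lsum_Nil lsum_Cons pairing_zero pairing_add)

lemma matapp_add: "matapp I K M (\<lambda>i. x i + y i) = (\<lambda>k. matapp I K M x k + matapp I K M y k)"
  by (auto simp: matapp_def fun_eq_iff distrib_left sum.distrib)

lemma matapp_scale: "matapp I K M (\<lambda>i. c * x i) = (\<lambda>k. c * matapp I K M x k)"
  by (auto simp: matapp_def fun_eq_iff sum_distrib_left ac_simps)

lemma matapp_zero: "matapp I K M (\<lambda>i. 0) = (\<lambda>k. 0)"
  by (auto simp: matapp_def fun_eq_iff)

lemma matapp_lsum: "matapp I K M (lsum ps f) = lsum ps (\<lambda>q. matapp I K M (f q))"
  by (induction ps) (auto simp: lsum_Nil lsum_Cons matapp_zero matapp_add)

lemma sum_list_nonneg': "(\<And>q. q \<in> set ps \<Longrightarrow> (0::real) \<le> f q) \<Longrightarrow> 0 \<le> sum_list (map f ps)"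
  by (induction ps) auto

definition lmin :: "('i \<Rightarrow> real) set \<Rightarrow> ('j \<Rightarrow> real) set \<Rightarrow> ('i \<times> 'j \<Rightarrow> real) set" where
  "lmin G H = {a. \<exists>ps. set ps \<subseteq> G \<times> H \<and> a = lsum ps (\<lambda>q. tensor (fst q) (snd q))}"

lemma min_sub_lmin: "min_tensor G H \<subseteq> lmin G H"
proof
  fix a assume "a \<in> min_tensor G H"
  then obtain k :: nat and g h where gh: "\<forall>t<k. g t \<in> G \<and> h t \<in> H"
    and a: "a = (\<lambda>p. \<Sum>t<k. tensor (g t) (h t) p)"
    unfolding min_tensor_def by blast
  define ps where "ps = map (\<lambda>t. (g t, h t)) [0..<k]"
  have "set ps \<subseteq> G \<times> H" using gh by (auto simp: ps_def)
  moreover have "a = lsum ps (\<lambda>q. tensor (fst q) (snd q))"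
  proof
    fix p
    have "lsum ps (\<lambda>q. tensor (fst q) (snd q)) p = sum_list (map (\<lambda>t. tensor (g t) (h t) p) [0..<k])"
      by (simp add: lsum_def ps_def o_def)
    also have "\<dots> = (\<Sum>t<k. tensor (g t) (h t) p)"
      by (simp add: sum_set_upt_conv_sum_list_nat[symmetric] atLeast0LessThan)
    finally show "a p = lsum ps (\<lambda>q. tensor (fst q) (snd q)) p" by (simp add: a)
  qed
  ultimately show "a \<in> lmin G H" by (auto simp: lmin_def)
qed

lemma lmin_space: "G \<subseteq> space I \<Longrightarrow> H \<subseteq> space J \<Longrightarrow> lmin G H \<subseteq> space (I \<times> J)"
  by (auto simp: lmin_def intro!: lsum_space tensor_space)

lemma tensor_scale: "(\<lambda>p. c * tensor g h p) = tensor (\<lambda>i. c * g i) h"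
  by (auto simp: tensor_def fun_eq_iff)

lemma lmin_cvx: "cvx G \<Longrightarrow> cvx (lmin G H)"
  unfolding cvx_def
proof (intro conjI ballI allI impI)
  assume G: "(\<forall>x\<in>G. \<forall>c::real. c \<ge> 0 \<longrightarrow> (\<lambda>i. c * x i) \<in> G) \<and> (\<forall>x\<in>G. \<forall>y\<in>G. (\<lambda>i. x i + y i) \<in> G)"
  fix x c assume x: "x \<in> lmin G H" and c: "(0::real) \<le> c"
  then obtain ps where ps: "set ps \<subseteq> G \<times> H" "x = lsum ps (\<lambda>q. tensor (fst q) (snd q))"
    by (auto simp: lmin_def)
  define ps' where "ps' = map (\<lambda>q. ((\<lambda>i. c * fst q i), snd q)) ps"
  have "set ps' \<subseteq> G \<times> H" using ps(1) G c by (auto simp: ps'_def)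
  moreover have "(\<lambda>i. c * x i) = lsum ps' (\<lambda>q. tensor (fst q) (snd q))"
    by (simp add: ps(2) lsum_scale ps'_def lsum_map tensor_scale)
  ultimately show "(\<lambda>i. c * x i) \<in> lmin G H" by (auto simp: lmin_def)
next
  fix x y assume "x \<in> lmin G H" "y \<in> lmin G H"
  then obtain ps qs where "set ps \<subseteq> G \<times> H" "x = lsum ps (\<lambda>q. tensor (fst q) (snd q))"
    "set qs \<subseteq> G \<times> H" "y = lsum qs (\<lambda>q. tensor (fst q) (snd q))"
    by (auto simp: lmin_def)
  then show "(\<lambda>i. x i + y i) \<in> lmin G H"
    unfolding lmin_def by (intro CollectI exI[of _ "ps @ qs"]) (auto simp: lsum_append)
qed

lemma lmin_pairing:
  assumes "w \<in> lmin (dual_cone I G) (dual_cone J H)" "z \<in> lmin G H"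
  shows "0 \<le> pairing (I \<times> J) w z"
proof -
  obtain ps where ps: "set ps \<subseteq> dual_cone I G \<times> dual_cone J H" "w = lsum ps (\<lambda>q. tensor (fst q) (snd q))"
    using assms(1) by (auto simp: lmin_def)
  obtain qs where qs: "set qs \<subseteq> G \<times> H" "z = lsum qs (\<lambda>q. tensor (fst q) (snd q))"
    using assms(2) by (auto simp: lmin_def)
  show ?thesis unfolding ps(2) qs(2) pairing_lsum_l pairing_lsum_r pairing_tensor
  proof (intro sum_list_nonneg')
    fix a b assume a: "a \<in> set ps" and b: "b \<in> set qs"
    have "fst a \<in> dual_cone I G" "snd a \<in> dual_cone J H" using ps(1) a by auto
    moreover have "fst b \<in> G" "snd b \<in> H" using qs(1) b by auto
    ultimately have "0 \<le> pairing I (fst a) (fst b)" "0 \<le> pairing J (snd a) (snd b)"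
      by (auto simp: dual_cone_def)
    then show "0 \<le> pairing I (fst a) (fst b) * pairing J (snd a) (snd b)" by simp
  qed
qed

lemma lmin_functorial:
  assumes "positive_map I K M G1 G2" "positive_map J L N H1 H2"
  shows "positive_map (I \<times> J) (K \<times> L) (mat_tensor M N) (lmin G1 H1) (lmin G2 H2)"
  unfolding positive_map_def
proof
  fix x assume "x \<in> lmin G1 H1"
  then obtain ps where ps: "set ps \<subseteq> G1 \<times> H1" "x = lsum ps (\<lambda>q. tensor (fst q) (snd q))"
    by (auto simp: lmin_def)
  define ps' where "ps' = map (\<lambda>q. (matapp I K M (fst q), matapp J L N (snd q))) ps"
  have "set ps' \<subseteq> G2 \<times> H2" using ps(1) assms by (auto simp: ps'_def positive_map_def)
  moreover have "matapp (I \<times> J) (K \<times> L) (mat_tensor M N) x = lsum ps' (\<lambda>q. tensor (fst q) (snd q))"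
    by (simp add: ps(2) matapp_lsum matapp_tensor ps'_def lsum_map)
  ultimately show "matapp (I \<times> J) (K \<times> L) (mat_tensor M N) x \<in> lmin G2 H2"
    by (auto simp: lmin_def)
qed

type_synonym tset = "(nat \<times> nat \<times> (nat \<Rightarrow> real) set \<times> (nat \<Rightarrow> real) set \<times> (nat \<times> nat \<Rightarrow> real)) set"

definition Fv :: "tset \<Rightarrow> nat \<Rightarrow> nat \<Rightarrow> (nat \<Rightarrow> real) set \<Rightarrow> (nat \<Rightarrow> real) set \<Rightarrow> (nat \<times> nat \<Rightarrow> real) set" where
  "Fv S n m G H = {z. (n, m, G, H, z) \<in> S}"

definition dl :: "nat \<Rightarrow> (nat \<Rightarrow> real) set \<Rightarrow> (nat \<Rightarrow> real) set" where
  "dl n G = dual_cone {..<n} G"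

definition valid1 :: "tset \<Rightarrow> bool" where
  "valid1 S \<longleftrightarrow> (\<forall>n m G H. proper_cone {..<n} G \<and> proper_cone {..<m} H \<longrightarrow>
     Fv S n m G H \<subseteq> space ({..<n} \<times> {..<m}) \<and> cvx (Fv S n m G H) \<and>
     min_tensor G H \<subseteq> Fv S n m G H \<and>
     (\<forall>z\<in>Fv S n m G H. \<forall>w\<in>Fv S n m (dl n G) (dl m H). 0 \<le> pairing ({..<n} \<times> {..<m}) w z))"

definition valid2 :: "tset \<Rightarrow> bool" where
  "valid2 S \<longleftrightarrow> (\<forall>n1 m1 n2 m2 G1 H1 G2 H2 M N.
        proper_cone {..<n1} G1 \<and> proper_cone {..<m1} H1 \<and>
        proper_cone {..<n2} G2 \<and> proper_cone {..<m2} H2 \<and>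
        positive_map {..<n1} {..<n2} M G1 G2 \<and> positive_map {..<m1} {..<m2} N H1 H2 \<longrightarrow>
        positive_map ({..<n1} \<times> {..<m1}) ({..<n2} \<times> {..<m2}) (mat_tensor M N)
          (Fv S n1 m1 G1 H1) (Fv S n2 m2 G2 H2))"

definition valid :: "tset \<Rightarrow> bool" where
  "valid S \<longleftrightarrow> valid1 S \<and> valid2 S"

definition Smin :: tset where
  "Smin = {(n, m, G, H, z). z \<in> lmin G H}"

lemma Fv_Smin: "Fv Smin n m G H = lmin G H"
  by (auto simp: Fv_def Smin_def)

lemma valid_Smin: "valid Smin"
  unfolding valid_def valid1_def valid2_def Fv_Smin
proof (intro conjI allI impI)
  fix n m :: nat and G H :: "(nat \<Rightarrow> real) set" assume GH: "proper_cone {..<n} G \<and> proper_cone {..<m} H"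
  show "lmin G H \<subseteq> space ({..<n} \<times> {..<m})"
    using GH by (intro lmin_space proper_basic) auto
  show "cvx (lmin G H)" using GH by (intro lmin_cvx proper_basic) auto
  show "min_tensor G H \<subseteq> lmin G H" by (rule min_sub_lmin)
  show "\<forall>z\<in>lmin G H. \<forall>w\<in>lmin (dl n G) (dl m H). 0 \<le> pairing ({..<n} \<times> {..<m}) w z"
    by (auto simp: dl_def intro: lmin_pairing)
next
  fix n1 m1 n2 m2 :: nat and G1 H1 G2 H2 :: "(nat \<Rightarrow> real) set" and M N :: "nat \<Rightarrow> nat \<Rightarrow> real"
  assume "proper_cone {..<n1} G1 \<and> proper_cone {..<m1} H1 \<and>
        proper_cone {..<n2} G2 \<and> proper_cone {..<m2} H2 \<and>
        positive_map {..<n1} {..<n2} M G1 G2 \<and> positive_map {..<m1} {..<m2} N H1 H2"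
  then show "positive_map ({..<n1} \<times> {..<m1}) ({..<n2} \<times> {..<m2}) (mat_tensor M N) (lmin G1 H1) (lmin G2 H2)"
    by (intro lmin_functorial) auto
qed

lemma Fv_Union: "Fv (\<Union>C) n m G H = (\<Union>S\<in>C. Fv S n m G H)"
  by (auto simp: Fv_def)

lemma Fv_mono: "S \<subseteq> T \<Longrightarrow> Fv S n m G H \<subseteq> Fv T n m G H"
  by (auto simp: Fv_def)

context
  fixes S :: tset and n m :: nat and G H :: "(nat \<Rightarrow> real) set"
  assumes vS: "valid S" and GH: "proper_cone {..<n} G" "proper_cone {..<m} H"
begin
lemma valid_sp: "Fv S n m G H \<subseteq> space ({..<n} \<times> {..<m})"
  using vS GH unfolding valid_def valid1_def by blast
lemma valid_cvx: "cvx (Fv S n m G H)"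
  using vS GH unfolding valid_def valid1_def by blast
lemma valid_min: "min_tensor G H \<subseteq> Fv S n m G H"
  using vS GH unfolding valid_def valid1_def by blast
lemma valid_ssd: "z \<in> Fv S n m G H \<Longrightarrow> w \<in> Fv S n m (dl n G) (dl m H) \<Longrightarrow> 0 \<le> pairing ({..<n} \<times> {..<m}) w z"
  using vS GH unfolding valid_def valid1_def by blast
end

lemma valid_fun:
  assumes "valid S" "proper_cone {..<n1} G1" "proper_cone {..<m1} H1"
        "proper_cone {..<n2} G2" "proper_cone {..<m2} H2"
        "positive_map {..<n1} {..<n2} M G1 G2" "positive_map {..<m1} {..<m2} N H1 H2"
  shows "positive_map ({..<n1} \<times> {..<m1}) ({..<n2} \<times> {..<m2}) (mat_tensor M N)
          (Fv S n1 m1 G1 H1) (Fv S n2 m2 G2 H2)"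
  using assms unfolding valid_def valid2_def by blast

lemma validI:
  assumes "\<And>n m G H. proper_cone {..<n} G \<Longrightarrow> proper_cone {..<m} H \<Longrightarrow> Fv S n m G H \<subseteq> space ({..<n} \<times> {..<m})"
    "\<And>n m G H. proper_cone {..<n} G \<Longrightarrow> proper_cone {..<m} H \<Longrightarrow> cvx (Fv S n m G H)"
    "\<And>n m G H. proper_cone {..<n} G \<Longrightarrow> proper_cone {..<m} H \<Longrightarrow> min_tensor G H \<subseteq> Fv S n m G H"
    "\<And>n m G H z w. proper_cone {..<n} G \<Longrightarrow> proper_cone {..<m} H \<Longrightarrow> z \<in> Fv S n m G H \<Longrightarrow>
       w \<in> Fv S n m (dl n G) (dl m H) \<Longrightarrow> 0 \<le> pairing ({..<n} \<times> {..<m}) w z"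
    "\<And>n1 m1 n2 m2 G1 H1 G2 H2 M N. proper_cone {..<n1} G1 \<Longrightarrow> proper_cone {..<m1} H1 \<Longrightarrow>
        proper_cone {..<n2} G2 \<Longrightarrow> proper_cone {..<m2} H2 \<Longrightarrow>
        positive_map {..<n1} {..<n2} M G1 G2 \<Longrightarrow> positive_map {..<m1} {..<m2} N H1 H2 \<Longrightarrow>
        positive_map ({..<n1} \<times> {..<m1}) ({..<n2} \<times> {..<m2}) (mat_tensor M N)
          (Fv S n1 m1 G1 H1) (Fv S n2 m2 G2 H2)"
  shows "valid S"
  unfolding valid_def valid1_def valid2_def
  apply (intro conjI allI impI ballI)
  using assms by auto

lemma valid_Union:
  assumes C: "C \<in> chains {S. valid S}" and ne: "C \<noteq> {}"
  shows "valid (\<Union>C)"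
proof -
  have vC: "\<And>S. S \<in> C \<Longrightarrow> valid S" using chainsD2[OF C] by auto
  have ch: "\<And>S T. S \<in> C \<Longrightarrow> T \<in> C \<Longrightarrow> S \<subseteq> T \<or> T \<subseteq> S" using chainsD[OF C] by blast
  show ?thesis
  proof (rule validI, unfold Fv_Union)
    fix n m :: nat and G H :: "(nat \<Rightarrow> real) set"
    assume G: "proper_cone {..<n} G" and H: "proper_cone {..<m} H"
    note sp = valid_sp[OF vC G H] and cv = valid_cvx[OF vC G H] and mi = valid_min[OF vC G H]
      and sd = valid_ssd[OF vC G H]
    show "(\<Union>S\<in>C. Fv S n m G H) \<subseteq> space ({..<n} \<times> {..<m})" using sp by blast
    show "min_tensor G H \<subseteq> (\<Union>S\<in>C. Fv S n m G H)" using mi ne by blast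
    show "cvx (\<Union>S\<in>C. Fv S n m G H)"
      unfolding cvx_def
    proof (intro conjI ballI allI impI)
      fix x c assume "x \<in> (\<Union>S\<in>C. Fv S n m G H)" "(0::real) \<le> c"
      then obtain S where "S \<in> C" "x \<in> Fv S n m G H" by blast
      then show "(\<lambda>i. c * x i) \<in> (\<Union>S\<in>C. Fv S n m G H)" using cvxD(1)[OF cv] \<open>0 \<le> c\<close> by blast
    next
      fix x y assume x: "x \<in> (\<Union>S\<in>C. Fv S n m G H)" and y: "y \<in> (\<Union>S\<in>C. Fv S n m G H)"
      then obtain S T where S: "S \<in> C" "x \<in> Fv S n m G H" and T: "T \<in> C" "y \<in> Fv T n m G H" by blast
      from ch[OF S(1) T(1)] show "(\<lambda>i. x i + y i) \<in> (\<Union>S\<in>C. Fv S n m G H)"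
      proof
        assume "S \<subseteq> T"
        then have "x \<in> Fv T n m G H" using Fv_mono S(2) by blast
        then show ?thesis using cvxD(2)[OF cv[OF T(1)] _ T(2)] T(1) by blast
      next
        assume "T \<subseteq> S"
        then have "y \<in> Fv S n m G H" using Fv_mono T(2) by blast
        then show ?thesis using cvxD(2)[OF cv[OF S(1)] S(2)] S(1) by blast
      qed
    qed
  next
    fix n m :: nat and G H :: "(nat \<Rightarrow> real) set" and z w
    assume G: "proper_cone {..<n} G" and H: "proper_cone {..<m} H"
      and z: "z \<in> (\<Union>S\<in>C. Fv S n m G H)" and w: "w \<in> (\<Union>S\<in>C. Fv S n m (dl n G) (dl m H))"
    note sd = valid_ssd[OF vC G H]
    obtain S T where S: "S \<in> C" "z \<in> Fv S n m G H" and T: "T \<in> C" "w \<in> Fv T n m (dl n G) (dl m H)"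
      using z w by blast
    from ch[OF S(1) T(1)] show "0 \<le> pairing ({..<n} \<times> {..<m}) w z"
    proof
      assume "S \<subseteq> T"
      then have "z \<in> Fv T n m G H" using Fv_mono S(2) by blast
      then show ?thesis using sd[OF T(1) _ T(2)] by blast
    next
      assume "T \<subseteq> S"
      then have "w \<in> Fv S n m (dl n G) (dl m H)" using Fv_mono T(2) by blast
      then show ?thesis using sd[OF S(1) S(2)] by blast
    qed
  next
    fix n1 m1 n2 m2 :: nat and G1 H1 G2 H2 :: "(nat \<Rightarrow> real) set" and M N :: "nat \<Rightarrow> nat \<Rightarrow> real"
    assume A: "proper_cone {..<n1} G1" "proper_cone {..<m1} H1"
        "proper_cone {..<n2} G2" "proper_cone {..<m2} H2"
        "positive_map {..<n1} {..<n2} M G1 G2" "positive_map {..<m1} {..<m2} N H1 H2"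
    note f = valid_fun[OF vC A]
    show "positive_map ({..<n1} \<times> {..<m1}) ({..<n2} \<times> {..<m2}) (mat_tensor M N)
          (\<Union>S\<in>C. Fv S n1 m1 G1 H1) (\<Union>S\<in>C. Fv S n2 m2 G2 H2)"
      unfolding positive_map_def
    proof
      fix x assume "x \<in> (\<Union>S\<in>C. Fv S n1 m1 G1 H1)"
      then obtain S where "S \<in> C" "x \<in> Fv S n1 m1 G1 H1" by blast
      then show "matapp ({..<n1} \<times> {..<m1}) ({..<n2} \<times> {..<m2}) (mat_tensor M N) x \<in> (\<Union>S\<in>C. Fv S n2 m2 G2 H2)"
        using f[of S] unfolding positive_map_def by blast
    qed
  qed
qed

lemma exists_maximal: "\<exists>M. valid M \<and> (\<forall>X. valid X \<and> M \<subseteq> X \<longrightarrow> X = M)"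
proof -
  have "\<forall>C\<in>chains {S. valid S}. \<exists>U\<in>{S. valid S}. \<forall>X\<in>C. X \<subseteq> U"
  proof
    fix C assume C: "C \<in> chains {S. valid S}"
    show "\<exists>U\<in>{S. valid S}. \<forall>X\<in>C. X \<subseteq> U"
    proof (cases "C = {}")
      case True then show ?thesis using valid_Smin by auto
    next
      case False then show ?thesis using valid_Union[OF C False] by auto
    qed
  qed
  from Zorn_Lemma2[OF this] show ?thesis by blast
qed


lemma cont_scale [continuous_intros]: "continuous_on S (\<lambda>x::'a \<Rightarrow> real. \<lambda>i. c * x i)"
  by (intro continuous_on_coordinatewise_then_product continuous_intros)

lemma cont_addc [continuous_intros]: "continuous_on S (\<lambda>x::'a \<Rightarrow> real. \<lambda>i. x i + y i)"
  by (intro continuous_on_coordinatewise_then_product continuous_intros)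

lemma cont_addc' [continuous_intros]: "continuous_on S (\<lambda>x::'a \<Rightarrow> real. \<lambda>i. y i + x i)"
  by (intro continuous_on_coordinatewise_then_product continuous_intros)

lemma cvx_closure:
  assumes "cvx K"
  shows "cvx (closure K)"
  unfolding cvx_def
proof (intro conjI ballI allI impI)
  fix x c assume x: "x \<in> closure K" and c: "(0::real) \<le> c"
  have "(\<lambda>x. \<lambda>i. c * x i) ` K \<subseteq> closure K" using cvxD(1)[OF assms _ c] closure_subset by blast
  then have "(\<lambda>x. \<lambda>i. c * x i) ` closure K \<subseteq> closure K"
    by (intro image_closure_subset continuous_intros) auto
  then show "(\<lambda>i. c * x i) \<in> closure K" using x by blast
next
  fix x y assume x: "x \<in> closure K" and y: "y \<in> closure K"
  have 1: "(\<lambda>i. x i + y i) \<in> closure K" if x: "x \<in> closure K" and y: "y \<in> K" for x y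
  proof -
    have "(\<lambda>x. \<lambda>i. x i + y i) ` K \<subseteq> closure K" using cvxD(2)[OF assms _ y] closure_subset by blast
    then have "(\<lambda>x. \<lambda>i. x i + y i) ` closure K \<subseteq> closure K"
      by (intro image_closure_subset continuous_intros) auto
    then show ?thesis using x by blast
  qed
  have "(\<lambda>y. \<lambda>i. x i + y i) ` K \<subseteq> closure K" using 1[OF x] by blast
  then have "(\<lambda>y. \<lambda>i. x i + y i) ` closure K \<subseteq> closure K"
    by (intro image_closure_subset continuous_intros) auto
  then show "(\<lambda>i. x i + y i) \<in> closure K" using y by blast
qed

definition Scl :: "tset \<Rightarrow> tset" where
  "Scl M = {(n, m, G, H, z). z \<in> closure (Fv M n m G H)}"

lemma Fv_Scl: "Fv (Scl M) n m G H = closure (Fv M n m G H)"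
  by (auto simp: Fv_def Scl_def)

lemma valid_closure:
  assumes vM: "valid M"
  shows "valid (Scl M)"
proof (rule validI, unfold Fv_Scl)
  fix n m :: nat and G H :: "(nat \<Rightarrow> real) set"
  assume G: "proper_cone {..<n} G" and H: "proper_cone {..<m} H"
  show "closure (Fv M n m G H) \<subseteq> space ({..<n} \<times> {..<m})"
    by (rule closure_minimal[OF valid_sp[OF vM G H] closed_space])
  show "cvx (closure (Fv M n m G H))" by (rule cvx_closure[OF valid_cvx[OF vM G H]])
  show "min_tensor G H \<subseteq> closure (Fv M n m G H)" using valid_min[OF vM G H] closure_subset by blast
next
  fix n m :: nat and G H :: "(nat \<Rightarrow> real) set" and z w
  assume G: "proper_cone {..<n} G" and H: "proper_cone {..<m} H"
    and z: "z \<in> closure (Fv M n m G H)" and w: "w \<in> closure (Fv M n m (dl n G) (dl m H))"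
  have "closure (Fv M n m G H) \<subseteq> {z. 0 \<le> pairing ({..<n} \<times> {..<m}) w z}"
    if w: "w \<in> Fv M n m (dl n G) (dl m H)" for w
    using valid_ssd[OF vM G H _ w]
    by (intro closure_minimal closed_Collect_le continuous_intros) auto
  then have "Fv M n m (dl n G) (dl m H) \<subseteq> {w. 0 \<le> pairing ({..<n} \<times> {..<m}) w z}" using z by blast
  then have "closure (Fv M n m (dl n G) (dl m H)) \<subseteq> {w. 0 \<le> pairing ({..<n} \<times> {..<m}) w z}"
    by (intro closure_minimal closed_Collect_le continuous_intros) auto
  then show "0 \<le> pairing ({..<n} \<times> {..<m}) w z" using w by blast
next
  fix n1 m1 n2 m2 :: nat and G1 H1 G2 H2 :: "(nat \<Rightarrow> real) set" and M' N :: "nat \<Rightarrow> nat \<Rightarrow> real"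
  assume A: "proper_cone {..<n1} G1" "proper_cone {..<m1} H1"
        "proper_cone {..<n2} G2" "proper_cone {..<m2} H2"
        "positive_map {..<n1} {..<n2} M' G1 G2" "positive_map {..<m1} {..<m2} N H1 H2"
  have "matapp ({..<n1} \<times> {..<m1}) ({..<n2} \<times> {..<m2}) (mat_tensor M' N) ` Fv M n1 m1 G1 H1
      \<subseteq> closure (Fv M n2 m2 G2 H2)"
    using valid_fun[OF vM A] closure_subset unfolding positive_map_def by blast
  then have "matapp ({..<n1} \<times> {..<m1}) ({..<n2} \<times> {..<m2}) (mat_tensor M' N) ` closure (Fv M n1 m1 G1 H1)
      \<subseteq> closure (Fv M n2 m2 G2 H2)"
    by (intro image_closure_subset continuous_intros) auto
  then show "positive_map ({..<n1} \<times> {..<m1}) ({..<n2} \<times> {..<m2}) (mat_tensor M' N)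
          (closure (Fv M n1 m1 G1 H1)) (closure (Fv M n2 m2 G2 H2))"
    unfolding positive_map_def by blast
qed

lemma maximal_closed:
  assumes vM: "valid M" and mx: "\<forall>X. valid X \<and> M \<subseteq> X \<longrightarrow> X = M"
  shows "closed (Fv M n m G H)"
proof -
  have "M \<subseteq> Scl M"
  proof
    fix t assume t: "t \<in> M"
    obtain a b c d e where te: "t = (a, b, c, d, e)" by (cases t) auto
    then have "e \<in> Fv M a b c d" using t by (simp add: Fv_def)
    then have "e \<in> closure (Fv M a b c d)" using closure_subset by blast
    then show "t \<in> Scl M" by (simp add: Scl_def te)
  qed
  then have "Scl M = M" using mx valid_closure[OF vM] by blast
  then have "closure (Fv M n m G H) = Fv M n m G H" using Fv_Scl[of M n m G H] by simp
  then show ?thesis by (metis closed_closure)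
qed


lemma cvx_sum:
  assumes "cvx K" "K \<noteq> {}" "finite A" "\<And>a. a \<in> A \<Longrightarrow> f a \<in> K"
  shows "(\<lambda>p. \<Sum>a\<in>A. f a p) \<in> K"
  using assms(3,4)
proof (induction A rule: finite_induct)
  case empty then show ?case using cvx_zero[OF assms(1,2)] by simp
next
  case (insert a A)
  have "(\<lambda>p. f a p + (\<Sum>a\<in>A. f a p)) \<in> K"
    using insert by (intro cvxD(2)[OF assms(1)]) auto
  then show ?case using insert by simp
qed

lemma sgn_times_self: "sgn (x::real) * x = \<bar>x\<bar>"
  by (simp add: sgn_if abs_if)

lemma fact1:
  assumes rho: "\<rho> \<ge> 0"
    and ball: "\<forall>u\<in>space IJ. (\<forall>c\<in>IJ. \<bar>u c\<bar> \<le> \<rho>) \<longrightarrow> (\<lambda>c. p c + u c) \<in> dual_cone IJ Q"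
    and k: "k \<in> Q"
  shows "\<rho> * nrm1 IJ k \<le> pairing IJ p k"
proof -
  define u where "u = (\<lambda>c. if c \<in> IJ then - \<rho> * sgn (k c) else 0)"
  have "u \<in> space IJ" by (auto simp: u_def space_def)
  moreover have "\<forall>c\<in>IJ. \<bar>u c\<bar> \<le> \<rho>"
  proof
    fix c assume "c \<in> IJ"
    have "\<bar>u c\<bar> = \<rho> * \<bar>sgn (k c)\<bar>" using \<open>c \<in> IJ\<close> rho by (simp add: u_def abs_mult)
    also have "\<dots> \<le> \<rho> * 1" using rho by (intro mult_left_mono) (auto simp: abs_sgn_eq)
    finally show "\<bar>u c\<bar> \<le> \<rho>" by simp
  qed
  ultimately have "(\<lambda>c. p c + u c) \<in> dual_cone IJ Q" using ball by blast
  then have "0 \<le> pairing IJ (\<lambda>c. p c + u c) k" using k by (auto simp: dual_cone_def)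
  also have "\<dots> = pairing IJ p k + pairing IJ u k" by (rule pairing_add)
  also have "pairing IJ u k = - \<rho> * nrm1 IJ k"
  proof -
    have "pairing IJ u k = (\<Sum>c\<in>IJ. - \<rho> * \<bar>k c\<bar>)"
      unfolding pairing_def u_def by (rule sum.cong) (auto simp: sgn_times_self mult.assoc)
    then show ?thesis by (simp add: nrm1_def sum_distrib_left)
  qed
  finally show ?thesis by simp
qed

lemma ev_pair: "ev (i, j) (a, b) = ev i a * ev j b"
  by (simp add: ev_def)

lemma tensor_ev: "tensor (ev i) (ev j) = ev (i, j)"
  by (auto simp: tensor_def ev_def fun_eq_iff)

lemma tensor_bilin:
  "tensor (\<lambda>i'. x i' + a * e i') (\<lambda>j'. y j' + b * f j') =
   (\<lambda>p. tensor x y p + b * tensor x f p + a * tensor e y p + (a * b) * tensor e f p)"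
  by (auto simp: tensor_def fun_eq_iff algebra_simps)

lemma pairing_bilin:
  "pairing IJ (tensor (\<lambda>i'. x i' + a * e i') (\<lambda>j'. y j' + b * f j')) k =
   pairing IJ (tensor x y) k + b * pairing IJ (tensor x f) k + a * pairing IJ (tensor e y) k
   + (a * b) * pairing IJ (tensor e f) k"
  unfolding tensor_bilin by (simp add: pairing_add pairing_scale)

lemma fact3:
  assumes fin: "finite I" "finite J" and d: "d > 0"
    and g0: "\<forall>u\<in>space I. (\<forall>i\<in>I. \<bar>u i\<bar> \<le> d) \<longrightarrow> (\<lambda>i. g0 i + u i) \<in> G"
    and h0: "\<forall>u\<in>space J. (\<forall>j\<in>J. \<bar>u j\<bar> \<le> d) \<longrightarrow> (\<lambda>j. h0 j + u j) \<in> H"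
    and k: "\<forall>g\<in>G. \<forall>h\<in>H. 0 \<le> pairing (I \<times> J) (tensor g h) k"
    and c: "c \<in> I \<times> J"
  shows "d^2 * \<bar>k c\<bar> \<le> pairing (I \<times> J) (tensor g0 h0) k"
proof -
  obtain i j where ij: "c = (i, j)" "i \<in> I" "j \<in> J" using c by auto
  let ?P = "\<lambda>x y. pairing (I \<times> J) (tensor x y) k"
  have Pe: "?P (ev i) (ev j) = k c"
    using ij fin pairing_ev[of "I \<times> J" "(i, j)" k] pairing_comm[of "I \<times> J" "ev (i, j)" k]
    by (simp add: tensor_ev)
  have gin: "(\<lambda>i'. g0 i' + a * ev i i') \<in> G" if "\<bar>a\<bar> \<le> d" for a
  proof -
    have "(\<lambda>i'. a * ev i i') \<in> space I" using ij(2) by (auto simp: space_def ev_def)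
    moreover have "\<forall>i'\<in>I. \<bar>a * ev i i'\<bar> \<le> d" using that d by (auto simp: ev_def)
    ultimately show ?thesis using g0[rule_format, of "\<lambda>i'. a * ev i i'"] by simp
  qed
  have hin: "(\<lambda>j'. h0 j' + b * ev j j') \<in> H" if "\<bar>b\<bar> \<le> d" for b
  proof -
    have "(\<lambda>j'. b * ev j j') \<in> space J" using ij(3) by (auto simp: space_def ev_def)
    moreover have "\<forall>j'\<in>J. \<bar>b * ev j j'\<bar> \<le> d" using that d by (auto simp: ev_def)
    ultimately show ?thesis using h0[rule_format, of "\<lambda>j'. b * ev j j'"] by simp
  qed
  have key: "0 \<le> 2 * ?P g0 h0 + 2 * (a * b) * k c" if "\<bar>a\<bar> \<le> d" "\<bar>b\<bar> \<le> d" for a b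
  proof -
    have "0 \<le> ?P (\<lambda>i'. g0 i' + a * ev i i') (\<lambda>j'. h0 j' + b * ev j j')"
      using k gin[OF that(1)] hin[OF that(2)] by blast
    moreover have "0 \<le> ?P (\<lambda>i'. g0 i' + (-a) * ev i i') (\<lambda>j'. h0 j' + (-b) * ev j j')"
      using k gin[of "-a"] hin[of "-b"] that by auto
    ultimately show ?thesis unfolding pairing_bilin Pe by simp
  qed
  have 1: "0 \<le> 2 * ?P g0 h0 + 2 * (d * d) * k c" using key[of d d] d by simp
  have 2: "0 \<le> 2 * ?P g0 h0 + 2 * (d * (-d)) * k c" using key[of d "-d"] d by simp
  show ?thesis
  proof (cases "k c \<ge> 0")
    case True then show ?thesis using 2 by (simp add: power2_eq_square)
  next
    case False then show ?thesis using 1 by (simp add: power2_eq_square)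
  qed
qed


lemma sum_ev: "finite A \<Longrightarrow> (\<Sum>c\<in>A. f c * ev c p) = (if p \<in> A then f p else 0)"
proof -
  assume "finite A"
  have "(\<Sum>c\<in>A. f c * ev c p) = (\<Sum>c\<in>A. if p = c then f c else 0)"
    by (rule sum.cong) (auto simp: ev_def)
  then show ?thesis using \<open>finite A\<close> by simp
qed

lemma interior_min:
  assumes fin: "finite I" "finite J" and G: "proper_cone I G" and H: "proper_cone J H"
    and P: "cvx P" and minP: "min_tensor G H \<subseteq> P"
  shows "\<exists>x\<in>P. \<exists>r>0. \<forall>u\<in>space (I \<times> J). (\<forall>c\<in>I \<times> J. \<bar>u c\<bar> \<le> r) \<longrightarrow> (\<lambda>c. x c + u c) \<in> P"
proof -
  obtain g0 dG where g0: "g0 \<in> G" "dG > 0"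
    and gb: "\<forall>u\<in>space I. (\<forall>i\<in>I. \<bar>u i\<bar> \<le> dG) \<longrightarrow> (\<lambda>i. g0 i + u i) \<in> G"
    using proper_ball[OF G] by blast
  obtain h0 dH where h0: "h0 \<in> H" "dH > 0"
    and hb: "\<forall>u\<in>space J. (\<forall>j\<in>J. \<bar>u j\<bar> \<le> dH) \<longrightarrow> (\<lambda>j. h0 j + u j) \<in> H"
    using proper_ball[OF H] by blast
  define d where "d = min dG dH"
  have d: "d > 0" using g0 h0 by (simp add: d_def)
  have gin: "(\<lambda>i'. g0 i' + a * ev i i') \<in> G" if "\<bar>a\<bar> \<le> d" "i \<in> I" for a i
  proof -
    have "(\<lambda>i'. a * ev i i') \<in> space I" using that by (auto simp: space_def ev_def)
    moreover have "\<forall>i'\<in>I. \<bar>a * ev i i'\<bar> \<le> dG" using that d by (auto simp: ev_def d_def)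
    ultimately show ?thesis using gb[rule_format, of "\<lambda>i'. a * ev i i'"] by simp
  qed
  have hin: "(\<lambda>j'. h0 j' + b * ev j j') \<in> H" if "\<bar>b\<bar> \<le> d" "j \<in> J" for b j
  proof -
    have "(\<lambda>j'. b * ev j j') \<in> space J" using that by (auto simp: space_def ev_def)
    moreover have "\<forall>j'\<in>J. \<bar>b * ev j j'\<bar> \<le> dH" using that d by (auto simp: ev_def d_def)
    ultimately show ?thesis using hb[rule_format, of "\<lambda>j'. b * ev j j'"] by simp
  qed
  define t0 where "t0 = tensor g0 h0"
  have t0P: "t0 \<in> P" using minP tensor_in_min[OF g0(1) h0(1)] by (auto simp: t0_def)
  have Pne: "P \<noteq> {}" using t0P by auto
  have elem: "(\<lambda>p. t0 p + w * ev c p) \<in> P" if c: "c \<in> I \<times> J" and w: "\<bar>w\<bar> \<le> d^2" for c w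
  proof -
    obtain i j where ij: "c = (i, j)" "i \<in> I" "j \<in> J" using c by auto
    define b where "b = w / d"
    have b: "\<bar>b\<bar> \<le> d" using w d by (simp add: b_def abs_divide divide_le_eq power2_eq_square)
    define Tp where "Tp = tensor (\<lambda>i'. g0 i' + d * ev i i') (\<lambda>j'. h0 j' + b * ev j j')"
    define Tm where "Tm = tensor (\<lambda>i'. g0 i' + (-d) * ev i i') (\<lambda>j'. h0 j' + (-b) * ev j j')"
    have "Tp \<in> P" unfolding Tp_def using minP gin[of d i] hin[of b j] ij b d
      by (auto intro!: tensor_in_min[THEN subsetD[OF minP]])
    moreover have "Tm \<in> P" unfolding Tm_def using minP gin[of "-d" i] hin[of "-b" j] ij b d
      by (auto intro!: tensor_in_min[THEN subsetD[OF minP]])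
    ultimately have "(\<lambda>p. (1/2) * Tp p + (1/2) * Tm p) \<in> P"
      by (intro cvxD(2)[OF P] cvxD(1)[OF P]) auto
    moreover have "(\<lambda>p. (1/2) * Tp p + (1/2) * Tm p) = (\<lambda>p. t0 p + w * ev c p)"
    proof
      fix p
      have "(1/2) * Tp p + (1/2) * Tm p = t0 p + (d * b) * tensor (ev i) (ev j) p"
        unfolding Tp_def Tm_def tensor_bilin t0_def by (simp add: algebra_simps)
      also have "d * b = w" using d by (simp add: b_def)
      finally show "(1/2) * Tp p + (1/2) * Tm p = t0 p + w * ev c p" by (simp add: tensor_ev ij)
    qed
    ultimately show ?thesis by simp
  qed
  define N where "N = real (card (I \<times> J))"
  define r where "r = d^2 / (N + 1)"
  have N0: "N \<ge> 0" by (simp add: N_def)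
  have r: "r > 0" using d N0 by (simp add: r_def)
  show ?thesis
  proof (intro bexI[OF _ t0P] exI[of _ r] conjI ballI impI r)
    fix u assume u: "u \<in> space (I \<times> J)" "\<forall>c\<in>I \<times> J. \<bar>u c\<bar> \<le> r"
    define u' where "u' c = (N + 1) * u c" for c
    have u'b: "\<bar>u' c\<bar> \<le> d^2" if "c \<in> I \<times> J" for c
    proof -
      have "\<bar>u' c\<bar> = (N + 1) * \<bar>u c\<bar>" using N0 by (simp add: u'_def abs_mult)
      also have "\<dots> \<le> (N + 1) * r" using u that N0 by (intro mult_left_mono) auto
      also have "\<dots> = d^2" using N0 by (simp add: r_def)
      finally show ?thesis .
    qed
    have S1: "(\<lambda>p. \<Sum>c\<in>I \<times> J. t0 p + u' c * ev c p) \<in> P"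
      using fin by (intro cvx_sum[OF P Pne] elem u'b) auto
    have S2: "(\<lambda>p. (\<Sum>c\<in>I \<times> J. t0 p + u' c * ev c p) + t0 p) \<in> P"
      using cvxD(2)[OF P S1 t0P] by simp
    have eq: "(\<Sum>c\<in>I \<times> J. t0 p + u' c * ev c p) + t0 p = (N + 1) * (t0 p + u p)" for p
    proof -
      have "(\<Sum>c\<in>I \<times> J. t0 p + u' c * ev c p) = N * t0 p + (\<Sum>c\<in>I \<times> J. u' c * ev c p)"
        by (simp add: sum.distrib N_def)
      also have "(\<Sum>c\<in>I \<times> J. u' c * ev c p) = u' p"
      proof (cases "p \<in> I \<times> J")
        case True then show ?thesis using fin by (simp add: sum_ev)
      next
        case False
        then have "u p = 0" using u(1) unfolding space_def by blast
        then show ?thesis using False fin by (simp add: sum_ev u'_def)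
      qed
      finally show ?thesis by (simp add: u'_def algebra_simps)
    qed
    have "(\<lambda>p. (1 / (N + 1)) * ((N + 1) * (t0 p + u p))) \<in> P"
      using cvxD(1)[OF P S2, of "1 / (N + 1)"] N0 unfolding eq by simp
    then show "(\<lambda>c. t0 c + u c) \<in> P" using N0 by simp
  qed
qed


lemma fact2:
  assumes posA: "positive_map I I A G (dual_cone I G)" and posB: "positive_map J J B H (dual_cone J H)"
    and Gs: "G \<subseteq> space I" and Hs: "H \<subseteq> space J"
    and minQ: "min_tensor (dual_cone I G) (dual_cone J H) \<subseteq> Q"
    and p: "p \<in> dual_cone (I \<times> J) Q" and g: "g \<in> G" and h: "h \<in> H"
  shows "0 \<le> pairing (I \<times> J) (tensor g h) (matapp (I \<times> J) (I \<times> J) (mat_tensor A B) p)"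
proof -
  have ga: "matapp I I (tr A) g \<in> dual_cone I G"
    using positive_tr[OF posA] subset_dual_dual[OF Gs] g unfolding positive_map_def by blast
  have hb: "matapp J J (tr B) h \<in> dual_cone J H"
    using positive_tr[OF posB] subset_dual_dual[OF Hs] h unfolding positive_map_def by blast
  have "tensor (matapp I I (tr A) g) (matapp J J (tr B) h) \<in> Q"
    using minQ tensor_in_min[OF ga hb] by blast
  then have "0 \<le> pairing (I \<times> J) p (tensor (matapp I I (tr A) g) (matapp J J (tr B) h))"
    using p by (auto simp: dual_cone_def)
  then show ?thesis
    by (simp add: pairing_adj tr_mat_tensor matapp_tensor pairing_comm)
qed

lemma cont_zt [continuous_intros]:
  "continuous_on S (\<lambda>t::real. (\<lambda>c. (1 - t) * x c + t * y c))"
  by (intro continuous_on_coordinatewise_then_product continuous_intros)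

lemma member_le_nrm1: "finite A \<Longrightarrow> c \<in> A \<Longrightarrow> \<bar>v c\<bar> \<le> nrm1 A v"
  unfolding nrm1_def by (rule member_le_sum) auto

lemma construct_z:
  fixes n m :: nat and G H :: "(nat \<Rightarrow> real) set" and P Q :: "(nat \<times> nat \<Rightarrow> real) set"
  assumes G: "proper_cone {..<n} G" and H: "proper_cone {..<m} H"
    and Pcl: "closed P" and Pc: "cvx P" and Psp: "P \<subseteq> space ({..<n} \<times> {..<m})"
    and minP: "min_tensor G H \<subseteq> P"
    and PQ: "P \<subseteq> dual_cone ({..<n} \<times> {..<m}) Q"
    and minQ: "min_tensor (dual_cone {..<n} G) (dual_cone {..<m} H) \<subseteq> Q"
    and funQ: "\<And>A B. positive_map {..<n} {..<n} A G (dual_cone {..<n} G) \<Longrightarrow>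
                      positive_map {..<m} {..<m} B H (dual_cone {..<m} H) \<Longrightarrow>
                      positive_map ({..<n} \<times> {..<m}) ({..<n} \<times> {..<m}) (mat_tensor A B) P Q"
    and yQ: "y \<in> dual_cone ({..<n} \<times> {..<m}) Q" and yP: "y \<notin> P"
  shows "\<exists>z\<in>dual_cone ({..<n} \<times> {..<m}) Q. z \<notin> P \<and>
     (\<forall>A B. positive_map {..<n} {..<n} A G (dual_cone {..<n} G) \<and>
            positive_map {..<m} {..<m} B H (dual_cone {..<m} H) \<longrightarrow>
       0 \<le> pairing ({..<n} \<times> {..<m}) z (matapp ({..<n} \<times> {..<m}) ({..<n} \<times> {..<m}) (mat_tensor A B) z))"
proof -
  define IJ where "IJ = {..<n} \<times> {..<m}"
  have finIJ: "finite IJ" by (simp add: IJ_def)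
  define Pst where "Pst = dual_cone IJ Q"
  have PstC: "cvx Pst" by (simp add: Pst_def dual_cvx)
  have PP: "P \<subseteq> Pst" using PQ by (simp add: Pst_def IJ_def)
  obtain x r where xP: "x \<in> P" and r: "r > 0"
    and xb: "\<forall>u\<in>space IJ. (\<forall>c\<in>IJ. \<bar>u c\<bar> \<le> r) \<longrightarrow> (\<lambda>c. x c + u c) \<in> P"
    using interior_min[OF _ _ G H Pc minP] by (auto simp: IJ_def)
  have xsp: "x \<in> space IJ" using xP Psp by (auto simp: IJ_def)
  have ysp: "y \<in> space IJ" using yQ by (auto simp: IJ_def dual_cone_def)
  have yPst: "y \<in> Pst" using yQ by (simp add: Pst_def IJ_def)
  define zt where "zt t = (\<lambda>c. (1 - t) * x c + t * y c)" for t :: real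
  define T0 where "T0 = {0..1} \<inter> zt -` P"
  have clT0: "closed T0" unfolding T0_def zt_def
    by (intro continuous_closed_preimage continuous_intros closed_atLeastAtMost Pcl)
  have zt0: "zt 0 = x" and zt1: "zt 1 = y" by (simp_all add: zt_def)
  have T0ne: "0 \<in> T0" using xP zt0 by (simp add: T0_def)
  have bdd: "bdd_above T0" by (auto simp: T0_def bdd_above_def)
  define t0 where "t0 = Sup T0"
  have t0T: "t0 \<in> T0" unfolding t0_def using closed_contains_Sup[OF _ bdd clT0] T0ne by blast
  have t0r: "0 \<le> t0" "t0 \<le> 1" and z0P: "zt t0 \<in> P" using t0T by (auto simp: T0_def)
  have notin: "zt t \<notin> P" if "t0 < t" "t \<le> 1" for t
  proof
    assume "zt t \<in> P"
    then have "t \<in> T0" using that t0r by (auto simp: T0_def)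
    then have "t \<le> t0" unfolding t0_def using bdd by (rule cSup_upper)
    then show False using that by simp
  qed
  have t01: "t0 < 1" using z0P yP zt1 t0r by (cases "t0 = 1") auto
  define t1 where "t1 = (1 + t0) / 2"
  have t1: "t0 < t1" "t1 < 1" using t01 by (auto simp: t1_def)
  define \<rho> where "\<rho> = (1 - t1) * r"
  have rho: "\<rho> > 0" using t1 r by (simp add: \<rho>_def)
  have rad: "(\<lambda>c. zt t c + u c) \<in> Pst"
    if t: "0 \<le> t" "t \<le> t1" and u: "u \<in> space IJ" "\<forall>c\<in>IJ. \<bar>u c\<bar> \<le> \<rho>" for t u
  proof -
    define s where "s = 1 - t"
    have s: "s > 0" "1 - t1 \<le> s" using t t1 by (auto simp: s_def)
    have "(\<lambda>c. x c + u c / s) \<in> P"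
    proof (rule xb[rule_format])
      show "(\<lambda>c. u c / s) \<in> space IJ" using u by (auto simp: space_def)
      fix c assume c: "c \<in> IJ"
      have "\<bar>u c / s\<bar> = \<bar>u c\<bar> / s" using s by (simp add: abs_divide)
      also have "\<dots> \<le> \<rho> / s" using u c s by (intro divide_right_mono) auto
      also have "\<dots> \<le> r"
        using s r by (simp add: \<rho>_def divide_le_eq mult.commute mult_left_mono)
      finally show "\<bar>u c / s\<bar> \<le> r" .
    qed
    then have "(\<lambda>c. x c + u c / s) \<in> Pst" using PP by blast
    then have a: "(\<lambda>c. s * (x c + u c / s)) \<in> Pst" using cvxD(1)[OF PstC] s by simp
    have b: "(\<lambda>c. t * y c) \<in> Pst" using cvxD(1)[OF PstC yPst] t by simp
    have "(\<lambda>c. s * (x c + u c / s) + t * y c) \<in> Pst" using cvxD(2)[OF PstC a b] by simp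
    moreover have "(\<lambda>c. s * (x c + u c / s) + t * y c) = (\<lambda>c. zt t c + u c)"
      using s by (auto simp: fun_eq_iff zt_def s_def field_simps)
    ultimately show ?thesis by simp
  qed
  define z0 where "z0 = zt t0"
  define v where "v = (\<lambda>c. y c - x c)"
  have vsp: "v \<in> space IJ" using xsp ysp by (auto simp: v_def space_def)
  have zt_eq: "zt (t0 + e) = (\<lambda>c. z0 c + e * v c)" for e
    by (auto simp: fun_eq_iff zt_def z0_def v_def algebra_simps)
  define Vb where "Vb = 1 + nrm1 IJ v"
  have Vb: "Vb > 0" using nrm1_nonneg[of IJ v] by (simp add: Vb_def)
  have vVb: "\<bar>v c\<bar> \<le> Vb" if "c \<in> IJ" for c
    using member_le_nrm1[OF finIJ that, of v] by (simp add: Vb_def)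
  define cc where "cc = \<rho> / Vb"
  have cc: "cc > 0" using rho Vb by (simp add: cc_def)
  have z0pm: "(\<lambda>c. z0 c + (s * cc) * v c) \<in> Pst" if s: "\<bar>s\<bar> = 1" for s
  proof -
    have "(\<lambda>c. zt t0 c + (s * cc) * v c) \<in> Pst"
    proof (rule rad)
      show "0 \<le> t0" "t0 \<le> t1" using t0r t1 by auto
      show "(\<lambda>c. (s * cc) * v c) \<in> space IJ" using vsp by (auto simp: space_def)
      show "\<forall>c\<in>IJ. \<bar>(s * cc) * v c\<bar> \<le> \<rho>"
      proof
        fix c assume "c \<in> IJ"
        have "\<bar>(s * cc) * v c\<bar> = cc * \<bar>v c\<bar>" using s cc by (simp add: abs_mult)
        also have "\<dots> \<le> cc * Vb" using vVb[OF \<open>c \<in> IJ\<close>] cc by (intro mult_left_mono) auto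
        also have "\<dots> = \<rho>" using Vb by (simp add: cc_def)
        finally show "\<bar>(s * cc) * v c\<bar> \<le> \<rho>" .
      qed
    qed
    then show ?thesis by (simp add: z0_def)
  qed
  obtain g0 dG where g0: "g0 \<in> G" "dG > 0"
    and gb: "\<forall>u\<in>space {..<n}. (\<forall>i\<in>{..<n}. \<bar>u i\<bar> \<le> dG) \<longrightarrow> (\<lambda>i. g0 i + u i) \<in> G"
    using proper_ball[OF G] by blast
  obtain h0 dH where h0: "h0 \<in> H" "dH > 0"
    and hb: "\<forall>u\<in>space {..<m}. (\<forall>j\<in>{..<m}. \<bar>u j\<bar> \<le> dH) \<longrightarrow> (\<lambda>j. h0 j + u j) \<in> H"
    using proper_ball[OF H] by blast
  define d where "d = min dG dH"
  have d: "d > 0" using g0 h0 by (simp add: d_def)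
  have gb': "\<forall>u\<in>space {..<n}. (\<forall>i\<in>{..<n}. \<bar>u i\<bar> \<le> d) \<longrightarrow> (\<lambda>i. g0 i + u i) \<in> G"
    using gb by (auto simp: d_def)
  have hb': "\<forall>u\<in>space {..<m}. (\<forall>j\<in>{..<m}. \<bar>u j\<bar> \<le> d) \<longrightarrow> (\<lambda>j. h0 j + u j) \<in> H"
    using hb by (auto simp: d_def)
  define W where "W = nrm1 IJ (tensor g0 h0)"
  have W: "\<forall>c\<in>IJ. \<bar>tensor g0 h0 c\<bar> \<le> W" using member_le_nrm1[OF finIJ] by (simp add: W_def)
  have W0: "W \<ge> 0" by (simp add: W_def nrm1_nonneg)
  define Cn where "Cn = real (card IJ)"
  define Cst where "Cst = Cn * W / (cc * d^2)"
  have Cst0: "Cst \<ge> 0" using W0 cc d by (simp add: Cst_def Cn_def)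
  define Zb where "Zb = nrm1 IJ x + nrm1 IJ y"
  have Zb0: "Zb \<ge> 0" by (simp add: Zb_def nrm1_nonneg)
  have ztb: "\<bar>zt t c\<bar> \<le> Zb" if "0 \<le> t" "t \<le> 1" "c \<in> IJ" for t c
  proof -
    have "\<bar>zt t c\<bar> \<le> \<bar>(1 - t) * x c\<bar> + \<bar>t * y c\<bar>"
      unfolding zt_def by (rule abs_triangle_ineq)
    also have "\<dots> = (1 - t) * \<bar>x c\<bar> + t * \<bar>y c\<bar>" using that by (simp add: abs_mult)
    also have "\<dots> \<le> \<bar>x c\<bar> + \<bar>y c\<bar>"
      using that by (intro add_mono mult_left_le_one_le) auto
    also have "\<dots> \<le> Zb" using member_le_nrm1[OF finIJ that(3), of x] member_le_nrm1[OF finIJ that(3), of y]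
      by (simp add: Zb_def)
    finally show ?thesis .
  qed
  define \<epsilon> where "\<epsilon> = min (t1 - t0) (\<rho> / (Zb * Cst + 1))"
  have "Zb * Cst + 1 > 0" using Zb0 Cst0 by (simp add: add_nonneg_pos)
  then have "\<rho> / (Zb * Cst + 1) > 0" using rho by simp
  then have eps: "\<epsilon> > 0" "\<epsilon> \<le> t1 - t0" using t1 by (auto simp: \<epsilon>_def)
  have epsb: "\<epsilon> * (Zb * Cst) \<le> \<rho>"
  proof -
    have ZC: "Zb * Cst \<ge> 0" using Zb0 Cst0 by simp
    have "\<epsilon> * (Zb * Cst) \<le> \<rho> / (Zb * Cst + 1) * (Zb * Cst)"
      using ZC by (intro mult_right_mono) (auto simp: \<epsilon>_def)
    also have "\<dots> \<le> \<rho>" using ZC rho by (simp add: field_simps)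
    finally show ?thesis .
  qed
  define z where "z = zt (t0 + \<epsilon>)"
  have zrad: "\<forall>u\<in>space IJ. (\<forall>c\<in>IJ. \<bar>u c\<bar> \<le> \<rho>) \<longrightarrow> (\<lambda>c. z c + u c) \<in> dual_cone IJ Q"
    using rad[of "t0 + \<epsilon>"] t0r eps unfolding z_def Pst_def by auto
  have zPst: "z \<in> dual_cone IJ Q"
    using zrad[rule_format, of "\<lambda>c. 0"] rho by (simp add: space_def)
  have znP: "z \<notin> P" unfolding z_def using notin[of "t0 + \<epsilon>"] eps t1 by auto
  have zb: "\<forall>c\<in>IJ. \<bar>z c\<bar> \<le> Zb" unfolding z_def using ztb t0r eps t1 by auto
  have Cz: "0 \<le> pairing IJ z (matapp IJ IJ (mat_tensor A B) z)"
    if posA: "positive_map {..<n} {..<n} A G (dual_cone {..<n} G)"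
      and posB: "positive_map {..<m} {..<m} B H (dual_cone {..<m} H)" for A B
  proof -
    define Lf where "Lf w = matapp IJ IJ (mat_tensor A B) w" for w
    have Lf_add: "Lf (\<lambda>c. a c + e * b c) = (\<lambda>c. Lf a c + e * Lf b c)" for a b e
      by (simp add: Lf_def matapp_add matapp_scale)
    have k0Q: "Lf z0 \<in> Q" using funQ[OF posA posB] z0P
      unfolding positive_map_def Lf_def IJ_def z0_def by blast
    define N where "N = nrm1 IJ (Lf z0)"
    have N0: "N \<ge> 0" by (simp add: N_def nrm1_nonneg)
    have f1: "\<rho> * N \<le> pairing IJ z (Lf z0)"
      unfolding N_def by (rule fact1[OF _ zrad k0Q]) (use rho in auto)
    have F2: "\<forall>g\<in>G. \<forall>h\<in>H. 0 \<le> pairing IJ (tensor g h) (Lf p)" if "p \<in> Pst" for p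
      using fact2[OF posA posB proper_basic(1)[OF G] proper_basic(1)[OF H] minQ, of p] that
      unfolding Lf_def Pst_def IJ_def by blast
    define Pg where "Pg k = pairing IJ (tensor g0 h0) k" for k
    define kp where "kp = Lf (\<lambda>c. z0 c + (1 * cc) * v c)"
    define km where "km = Lf (\<lambda>c. z0 c + ((-1) * cc) * v c)"
    have kpb: "d^2 * \<bar>kp c\<bar> \<le> Pg kp" if "c \<in> IJ" for c
      unfolding Pg_def IJ_def
      by (rule fact3[OF _ _ d gb' hb']) (use F2[OF z0pm[of 1]] that in \<open>auto simp: kp_def IJ_def\<close>)
    have kmb: "d^2 * \<bar>km c\<bar> \<le> Pg km" if "c \<in> IJ" for c
      unfolding Pg_def IJ_def
      by (rule fact3[OF _ _ d gb' hb']) (use F2[OF z0pm[of "-1"]] that in \<open>auto simp: km_def IJ_def\<close>)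
    have kpe: "kp = (\<lambda>c. Lf z0 c + (1 * cc) * Lf v c)" unfolding kp_def by (rule Lf_add)
    have kme: "km = (\<lambda>c. Lf z0 c + ((-1) * cc) * Lf v c)" unfolding km_def by (rule Lf_add)
    have Pgsum: "Pg kp + Pg km = 2 * Pg (Lf z0)"
      unfolding Pg_def kpe kme pairing_add pairing_scale by simp
    have Pgb: "Pg (Lf z0) \<le> W * N"
      using pairing_bound[OF W, of "Lf z0"] unfolding Pg_def N_def by simp
    have dd: "d^2 > 0" using d by simp
    have Lvb: "\<bar>Lf v c\<bar> \<le> W * N / (cc * d^2)" if c: "c \<in> IJ" for c
    proof -
      have "2 * cc * \<bar>Lf v c\<bar> = \<bar>kp c - km c\<bar>" using cc by (simp add: kpe kme abs_mult)
      also have "\<dots> \<le> \<bar>kp c\<bar> + \<bar>km c\<bar>" by (rule abs_triangle_ineq4)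
      finally have "d^2 * (2 * cc * \<bar>Lf v c\<bar>) \<le> d^2 * (\<bar>kp c\<bar> + \<bar>km c\<bar>)"
        using dd by (intro mult_left_mono) auto
      also have "\<dots> = d^2 * \<bar>kp c\<bar> + d^2 * \<bar>km c\<bar>" by (simp add: distrib_left)
      also have "\<dots> \<le> 2 * Pg (Lf z0)" using kpb[OF c] kmb[OF c] Pgsum by simp
      also have "\<dots> \<le> 2 * (W * N)" using Pgb by simp
      finally have "(cc * d^2) * \<bar>Lf v c\<bar> \<le> W * N" by (simp add: algebra_simps)
      then show ?thesis using cc dd by (simp add: field_simps)
    qed
    have nLv: "nrm1 IJ (Lf v) \<le> Cst * N"
    proof -
      have "nrm1 IJ (Lf v) \<le> of_nat (card IJ) * (W * N / (cc * d^2))"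
        unfolding nrm1_def by (rule sum_bounded_above) (rule Lvb)
      then show ?thesis by (simp add: Cst_def Cn_def)
    qed
    have "\<bar>pairing IJ z (Lf v)\<bar> \<le> Zb * nrm1 IJ (Lf v)" by (rule pairing_bound[OF zb])
    also have "\<dots> \<le> Zb * (Cst * N)" using nLv Zb0 by (intro mult_left_mono) auto
    finally have pv: "\<bar>pairing IJ z (Lf v)\<bar> \<le> Zb * Cst * N" by simp
    have "Lf z = (\<lambda>c. Lf z0 c + \<epsilon> * Lf v c)" unfolding z_def zt_eq by (rule Lf_add)
    then have "pairing IJ z (Lf z) = pairing IJ z (Lf z0) + \<epsilon> * pairing IJ z (Lf v)"
      by (simp add: pairing_add pairing_scale)
    moreover have "\<epsilon> * pairing IJ z (Lf v) \<ge> - (\<epsilon> * (Zb * Cst * N))"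
    proof -
      have "\<epsilon> * \<bar>pairing IJ z (Lf v)\<bar> \<le> \<epsilon> * (Zb * Cst * N)" using pv eps by (intro mult_left_mono) auto
      moreover have "- (\<epsilon> * \<bar>pairing IJ z (Lf v)\<bar>) \<le> \<epsilon> * pairing IJ z (Lf v)"
      proof -
        have "- \<bar>pairing IJ z (Lf v)\<bar> \<le> pairing IJ z (Lf v)" by linarith
        then have "\<epsilon> * (- \<bar>pairing IJ z (Lf v)\<bar>) \<le> \<epsilon> * pairing IJ z (Lf v)"
          using eps by (intro mult_left_mono) auto
        then show ?thesis by simp
      qed
      ultimately show ?thesis by simp
    qed
    moreover have "\<epsilon> * (Zb * Cst * N) \<le> \<rho> * N"
      using mult_right_mono[OF epsb N0] by (simp add: mult.assoc)
    ultimately have "0 \<le> pairing IJ z (Lf z)" using f1 by simp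
    then show ?thesis by (simp add: Lf_def)
  qed
  show ?thesis
    using zPst znP Cz unfolding IJ_def by blast
qed


lemma positive_mono_src: "positive_map I K M G1 G2 \<Longrightarrow> G0 \<subseteq> G1 \<Longrightarrow> positive_map I K M G0 G2"
  by (auto simp: positive_map_def)

lemma matapp_smat: "matapp I K (\<lambda>k i. c * A k i) x = (\<lambda>k. c * matapp I K A x k)"
  by (auto simp: matapp_def fun_eq_iff sum_distrib_left ac_simps)

lemma mat_tensor_smul: "mat_tensor (\<lambda>k i. c * A k i) B = (\<lambda>kl ij. c * mat_tensor A B kl ij)"
  by (auto simp: mat_tensor_def fun_eq_iff)

lemma positive_smul:
  "cvx G2 \<Longrightarrow> c \<ge> 0 \<Longrightarrow> positive_map I K A G1 G2 \<Longrightarrow> positive_map I K (\<lambda>k i. c * A k i) G1 G2"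
  by (auto simp: positive_map_def matapp_smat intro: cvxD(1))

lemma mat_tensor_idm: "mat_tensor idm idm = idm"
  by (auto simp: mat_tensor_def idm_def fun_eq_iff)

lemma dl_proper: "proper_cone {..<n} G \<Longrightarrow> proper_cone {..<n} (dl n G)"
  unfolding dl_def by (rule dual_proper) auto

context
  fixes M :: tset and n m :: nat and G H :: "(nat \<Rightarrow> real) set" and z :: "nat \<times> nat \<Rightarrow> real"
  assumes vM: "valid M"
    and G: "proper_cone {..<n} G" and H: "proper_cone {..<m} H"
    and zQ: "z \<in> dual_cone ({..<n} \<times> {..<m}) (Fv M n m (dl n G) (dl m H))"
    and Cz: "\<And>A B. positive_map {..<n} {..<n} A G (dl n G) \<Longrightarrow>
                    positive_map {..<m} {..<m} B H (dl m H) \<Longrightarrow>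
       0 \<le> pairing ({..<n} \<times> {..<m}) z (matapp ({..<n} \<times> {..<m}) ({..<n} \<times> {..<m}) (mat_tensor A B) z)"
begin

definition fz :: "nat \<Rightarrow> nat \<Rightarrow> ((nat \<Rightarrow> nat \<Rightarrow> real) \<times> (nat \<Rightarrow> nat \<Rightarrow> real)) list \<Rightarrow> nat \<times> nat \<Rightarrow> real" where
  "fz n' m' ps = lsum ps (\<lambda>q. matapp ({..<n} \<times> {..<m}) ({..<n'} \<times> {..<m'}) (mat_tensor (fst q) (snd q)) z)"

definition Ext :: "nat \<Rightarrow> nat \<Rightarrow> (nat \<Rightarrow> real) set \<Rightarrow> (nat \<Rightarrow> real) set \<Rightarrow> (nat \<times> nat \<Rightarrow> real) set" where
  "Ext n' m' G' H' = {w. \<exists>p\<in>Fv M n' m' G' H'. \<exists>ps.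
      (\<forall>q\<in>set ps. positive_map {..<n} {..<n'} (fst q) G G' \<and> positive_map {..<m} {..<m'} (snd q) H H') \<and>
      w = (\<lambda>c. p c + fz n' m' ps c)}"

definition S' :: tset where
  "S' = M \<union> {(n', m', G', H', w). proper_cone {..<n'} G' \<and> proper_cone {..<m'} H' \<and> w \<in> Ext n' m' G' H'}"

lemma Fv_sub_Ext: "Fv M n' m' G' H' \<subseteq> Ext n' m' G' H'"
proof
  fix p assume "p \<in> Fv M n' m' G' H'"
  moreover have "p = (\<lambda>c. p c + fz n' m' [] c)" by (simp add: fz_def lsum_Nil)
  ultimately show "p \<in> Ext n' m' G' H'" unfolding Ext_def by (intro CollectI bexI[of _ p] exI[of _ "[]"]) auto
qed

lemma Fv_S': "proper_cone {..<n'} G' \<Longrightarrow> proper_cone {..<m'} H' \<Longrightarrow> Fv S' n' m' G' H' = Ext n' m' G' H'"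
proof -
  assume "proper_cone {..<n'} G'" "proper_cone {..<m'} H'"
  then have "Fv S' n' m' G' H' = Fv M n' m' G' H' \<union> Ext n' m' G' H'" by (auto simp: S'_def Fv_def)
  then show ?thesis using Fv_sub_Ext[of n' m' G' H'] by blast
qed

lemma ExtE:
  assumes "w \<in> Ext n' m' G' H'"
  obtains p ps where "p \<in> Fv M n' m' G' H'"
    "\<And>q. q \<in> set ps \<Longrightarrow> positive_map {..<n} {..<n'} (fst q) G G'"
    "\<And>q. q \<in> set ps \<Longrightarrow> positive_map {..<m} {..<m'} (snd q) H H'"
    "w = (\<lambda>c. p c + fz n' m' ps c)"
  using assms unfolding Ext_def by blast

lemma ExtI:
  assumes "p \<in> Fv M n' m' G' H'"
    "\<And>q. q \<in> set ps \<Longrightarrow> positive_map {..<n} {..<n'} (fst q) G G'"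
    "\<And>q. q \<in> set ps \<Longrightarrow> positive_map {..<m} {..<m'} (snd q) H H'"
  shows "(\<lambda>c. p c + fz n' m' ps c) \<in> Ext n' m' G' H'"
  using assms unfolding Ext_def by blast

lemma valid_S': "valid S'"
proof (rule validI)
  fix n' m' :: nat and G' H' :: "(nat \<Rightarrow> real) set"
  assume G': "proper_cone {..<n'} G'" and H': "proper_cone {..<m'} H'"
  show "Fv S' n' m' G' H' \<subseteq> space ({..<n'} \<times> {..<m'})"
  proof
    fix w assume "w \<in> Fv S' n' m' G' H'"
    then obtain p ps where p: "p \<in> Fv M n' m' G' H'" and w: "w = (\<lambda>c. p c + fz n' m' ps c)"
      unfolding Fv_S'[OF G' H'] unfolding Ext_def by blast
    have "p \<in> space ({..<n'} \<times> {..<m'})" using valid_sp[OF vM G' H'] p by blast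
    moreover have "fz n' m' ps \<in> space ({..<n'} \<times> {..<m'})"
      unfolding fz_def by (rule lsum_space) (rule matapp_space)
    ultimately show "w \<in> space ({..<n'} \<times> {..<m'})" by (auto simp: w space_def)
  qed
  show "min_tensor G' H' \<subseteq> Fv S' n' m' G' H'"
    unfolding Fv_S'[OF G' H'] using valid_min[OF vM G' H'] Fv_sub_Ext by blast
  have cvG': "cvx G'" by (rule proper_basic(3)[OF G'])
  show "cvx (Fv S' n' m' G' H')"
    unfolding Fv_S'[OF G' H'] cvx_def
  proof (intro conjI ballI allI impI)
    fix w and c :: real assume wE: "w \<in> Ext n' m' G' H'" and c: "0 \<le> c"
    obtain p ps where p: "p \<in> Fv M n' m' G' H'"
      and q1q2: "\<forall>q\<in>set ps. positive_map {..<n} {..<n'} (fst q) G G' \<and> positive_map {..<m} {..<m'} (snd q) H H'"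
      and w: "w = (\<lambda>i. p i + fz n' m' ps i)" using wE unfolding Ext_def by blast
    have q1: "\<And>q. q \<in> set ps \<Longrightarrow> positive_map {..<n} {..<n'} (fst q) G G'" using q1q2 by blast
    have q2: "\<And>q. q \<in> set ps \<Longrightarrow> positive_map {..<m} {..<m'} (snd q) H H'" using q1q2 by blast
    define ps' where "ps' = map (\<lambda>q. ((\<lambda>k i. c * fst q k i), snd q)) ps"
    have "(\<lambda>i. c * p i) \<in> Fv M n' m' G' H'" using cvxD(1)[OF valid_cvx[OF vM G' H'] p c] .
    moreover have "(\<lambda>i. c * w i) = (\<lambda>i. c * p i + fz n' m' ps' i)"
    proof -
      have "(\<lambda>i. c * fz n' m' ps i) = fz n' m' ps'"
        unfolding fz_def lsum_scale ps'_def lsum_map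
        by (simp add: mat_tensor_smul matapp_smat)
      then have "\<And>i. c * fz n' m' ps i = fz n' m' ps' i" by (metis (no_types))
      then show ?thesis by (simp add: w distrib_left)
    qed
    moreover have "\<And>q. q \<in> set ps' \<Longrightarrow> positive_map {..<n} {..<n'} (fst q) G G'"
      using q1 c cvG' by (fastforce simp: ps'_def intro!: positive_smul)
    moreover have "\<And>q. q \<in> set ps' \<Longrightarrow> positive_map {..<m} {..<m'} (snd q) H H'"
      using q2 by (auto simp: ps'_def)
    ultimately show "(\<lambda>i. c * w i) \<in> Ext n' m' G' H'" by (auto intro!: ExtI)
  next
    fix w1 w2 assume w1: "w1 \<in> Ext n' m' G' H'" and w2: "w2 \<in> Ext n' m' G' H'"
    obtain p1 ps1 where p1: "p1 \<in> Fv M n' m' G' H'"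
      and a1b1: "\<forall>q\<in>set ps1. positive_map {..<n} {..<n'} (fst q) G G' \<and> positive_map {..<m} {..<m'} (snd q) H H'"
      and e1: "w1 = (\<lambda>c. p1 c + fz n' m' ps1 c)" using w1 unfolding Ext_def by blast
    have a1: "\<And>q. q \<in> set ps1 \<Longrightarrow> positive_map {..<n} {..<n'} (fst q) G G'" using a1b1 by blast
    have b1: "\<And>q. q \<in> set ps1 \<Longrightarrow> positive_map {..<m} {..<m'} (snd q) H H'" using a1b1 by blast
    obtain p2 ps2 where p2: "p2 \<in> Fv M n' m' G' H'"
      and a2b2: "\<forall>q\<in>set ps2. positive_map {..<n} {..<n'} (fst q) G G' \<and> positive_map {..<m} {..<m'} (snd q) H H'"
      and e2: "w2 = (\<lambda>c. p2 c + fz n' m' ps2 c)" using w2 unfolding Ext_def by blast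
    have a2: "\<And>q. q \<in> set ps2 \<Longrightarrow> positive_map {..<n} {..<n'} (fst q) G G'" using a2b2 by blast
    have b2: "\<And>q. q \<in> set ps2 \<Longrightarrow> positive_map {..<m} {..<m'} (snd q) H H'" using a2b2 by blast
    have "(\<lambda>i. p1 i + p2 i) \<in> Fv M n' m' G' H'" using cvxD(2)[OF valid_cvx[OF vM G' H'] p1 p2] .
    moreover have "(\<lambda>i. w1 i + w2 i) = (\<lambda>i. (p1 i + p2 i) + fz n' m' (ps1 @ ps2) i)"
      by (simp add: e1 e2 fz_def lsum_append fun_eq_iff algebra_simps)
    moreover have "\<And>q. q \<in> set (ps1 @ ps2) \<Longrightarrow> positive_map {..<n} {..<n'} (fst q) G G'"
      using a1 a2 by auto
    moreover have "\<And>q. q \<in> set (ps1 @ ps2) \<Longrightarrow> positive_map {..<m} {..<m'} (snd q) H H'"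
      using b1 b2 by auto
    ultimately show "(\<lambda>i. w1 i + w2 i) \<in> Ext n' m' G' H'" by (auto intro!: ExtI)
  qed
next
  fix n' m' :: nat and G' H' :: "(nat \<Rightarrow> real) set" and w1 w2
  assume G': "proper_cone {..<n'} G'" and H': "proper_cone {..<m'} H'"
    and w1: "w1 \<in> Fv S' n' m' G' H'" and w2: "w2 \<in> Fv S' n' m' (dl n' G') (dl m' H')"
  have dG': "proper_cone {..<n'} (dl n' G')" by (rule dl_proper[OF G'])
  have dH': "proper_cone {..<m'} (dl m' H')" by (rule dl_proper[OF H'])
  have dG: "proper_cone {..<n} (dl n G)" by (rule dl_proper[OF G])
  have dH: "proper_cone {..<m} (dl m H)" by (rule dl_proper[OF H])
  obtain p1 ps1 where p1: "p1 \<in> Fv M n' m' G' H'"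
    and a1b1: "\<forall>q\<in>set ps1. positive_map {..<n} {..<n'} (fst q) G G' \<and> positive_map {..<m} {..<m'} (snd q) H H'"
    and e1: "w1 = (\<lambda>c. p1 c + fz n' m' ps1 c)"
    using w1 unfolding Fv_S'[OF G' H'] unfolding Ext_def by blast
  have a1: "\<And>q. q \<in> set ps1 \<Longrightarrow> positive_map {..<n} {..<n'} (fst q) G G'" using a1b1 by blast
  have b1: "\<And>q. q \<in> set ps1 \<Longrightarrow> positive_map {..<m} {..<m'} (snd q) H H'" using a1b1 by blast
  obtain p2 ps2 where p2: "p2 \<in> Fv M n' m' (dl n' G') (dl m' H')"
    and a2b2: "\<forall>q\<in>set ps2. positive_map {..<n} {..<n'} (fst q) G (dl n' G') \<and> positive_map {..<m} {..<m'} (snd q) H (dl m' H')"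
    and e2: "w2 = (\<lambda>c. p2 c + fz n' m' ps2 c)"
    using w2 unfolding Fv_S'[OF dG' dH'] unfolding Ext_def by blast
  have a2: "\<And>q. q \<in> set ps2 \<Longrightarrow> positive_map {..<n} {..<n'} (fst q) G (dl n' G')" using a2b2 by blast
  have b2: "\<And>q. q \<in> set ps2 \<Longrightarrow> positive_map {..<m} {..<m'} (snd q) H (dl m' H')" using a2b2 by blast
  let ?IJ = "{..<n} \<times> {..<m}" and ?IJ' = "{..<n'} \<times> {..<m'}"
  let ?Q = "Fv M n m (dl n G) (dl m H)"
  have zpos: "0 \<le> pairing ?IJ z k" if "k \<in> ?Q" for k
    using zQ that by (auto simp: dual_cone_def)
  have tb: "0 \<le> pairing ?IJ' p2 (matapp ?IJ ?IJ' (mat_tensor (fst q) (snd q)) z)" if q: "q \<in> set ps1" for q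
  proof -
    have "positive_map {..<n'} {..<n} (tr (fst q)) (dl n' G') (dl n G)"
      using positive_tr[OF a1[OF q]] by (simp add: dl_def)
    moreover have "positive_map {..<m'} {..<m} (tr (snd q)) (dl m' H') (dl m H)"
      using positive_tr[OF b1[OF q]] by (simp add: dl_def)
    ultimately have "matapp ?IJ' ?IJ (mat_tensor (tr (fst q)) (tr (snd q))) p2 \<in> ?Q"
      using valid_fun[OF vM dG' dH' dG dH] p2 unfolding positive_map_def by blast
    then have "0 \<le> pairing ?IJ z (matapp ?IJ' ?IJ (mat_tensor (tr (fst q)) (tr (snd q))) p2)"
      by (rule zpos)
    also have "\<dots> = pairing ?IJ (matapp ?IJ' ?IJ (tr (mat_tensor (fst q) (snd q))) p2) z"
      unfolding tr_mat_tensor by (rule pairing_comm)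
    also have "\<dots> = pairing ?IJ' p2 (matapp ?IJ ?IJ' (mat_tensor (fst q) (snd q)) z)"
      by (rule pairing_adj[symmetric])
    finally show ?thesis .
  qed
  have tc: "0 \<le> pairing ?IJ' (matapp ?IJ ?IJ' (mat_tensor (fst q) (snd q)) z) p1" if q: "q \<in> set ps2" for q
  proof -
    have "positive_map {..<n'} {..<n} (tr (fst q)) (dl n' (dl n' G')) (dl n G)"
      using positive_tr[OF a2[OF q]] by (simp add: dl_def)
    then have "positive_map {..<n'} {..<n} (tr (fst q)) G' (dl n G)"
      using subset_dual_dual[OF proper_basic(1)[OF G']] by (auto simp: dl_def intro: positive_mono_src)
    moreover have "positive_map {..<m'} {..<m} (tr (snd q)) (dl m' (dl m' H')) (dl m H)"
      using positive_tr[OF b2[OF q]] by (simp add: dl_def)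
    then have "positive_map {..<m'} {..<m} (tr (snd q)) H' (dl m H)"
      using subset_dual_dual[OF proper_basic(1)[OF H']] by (auto simp: dl_def intro: positive_mono_src)
    ultimately have "matapp ?IJ' ?IJ (mat_tensor (tr (fst q)) (tr (snd q))) p1 \<in> ?Q"
      using valid_fun[OF vM G' H' dG dH] p1 unfolding positive_map_def by blast
    then have "0 \<le> pairing ?IJ z (matapp ?IJ' ?IJ (mat_tensor (tr (fst q)) (tr (snd q))) p1)"
      by (rule zpos)
    also have "\<dots> = pairing ?IJ (matapp ?IJ' ?IJ (tr (mat_tensor (fst q) (snd q))) p1) z"
      unfolding tr_mat_tensor by (rule pairing_comm)
    also have "\<dots> = pairing ?IJ' p1 (matapp ?IJ ?IJ' (mat_tensor (fst q) (snd q)) z)"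
      by (rule pairing_adj[symmetric])
    also have "\<dots> = pairing ?IJ' (matapp ?IJ ?IJ' (mat_tensor (fst q) (snd q)) z) p1"
      by (rule pairing_comm)
    finally show ?thesis .
  qed
  have td: "0 \<le> pairing ?IJ' (matapp ?IJ ?IJ' (mat_tensor (fst q') (snd q')) z)
                              (matapp ?IJ ?IJ' (mat_tensor (fst q) (snd q)) z)"
    if q': "q' \<in> set ps2" and q: "q \<in> set ps1" for q q'
  proof -
    define A where "A = mmul {..<n'} (tr (fst q)) (fst q')"
    define B where "B = mmul {..<m'} (tr (snd q)) (snd q')"
    have "positive_map {..<n'} {..<n} (tr (fst q)) (dl n' G') (dl n G)"
      using positive_tr[OF a1[OF q]] by (simp add: dl_def)
    then have pA: "positive_map {..<n} {..<n} A G (dl n G)"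
      unfolding A_def by (intro positive_comp[OF _ _ a2[OF q']]) auto
    have "positive_map {..<m'} {..<m} (tr (snd q)) (dl m' H') (dl m H)"
      using positive_tr[OF b1[OF q]] by (simp add: dl_def)
    then have pB: "positive_map {..<m} {..<m} B H (dl m H)"
      unfolding B_def by (intro positive_comp[OF _ _ b2[OF q']]) auto
    have "pairing ?IJ' (matapp ?IJ ?IJ' (mat_tensor (fst q') (snd q')) z)
                              (matapp ?IJ ?IJ' (mat_tensor (fst q) (snd q)) z)
        = pairing ?IJ (matapp ?IJ' ?IJ (mat_tensor (tr (fst q)) (tr (snd q)))
                         (matapp ?IJ ?IJ' (mat_tensor (fst q') (snd q')) z)) z"
      unfolding tr_mat_tensor[symmetric] by (rule pairing_adj)
    also have "\<dots> = pairing ?IJ (matapp ?IJ ?IJ (mat_tensor A B) z) z"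
      unfolding A_def B_def mmul_mat_tensor[symmetric] by (subst matapp_comp) auto
    also have "\<dots> = pairing ?IJ z (matapp ?IJ ?IJ (mat_tensor A B) z)" by (rule pairing_comm)
    finally show ?thesis using Cz[OF pA pB] by simp
  qed
  have ta: "0 \<le> pairing ?IJ' p2 p1" by (rule valid_ssd[OF vM G' H' p1 p2])
  have "pairing ?IJ' w2 w1 = pairing ?IJ' p2 p1 + pairing ?IJ' p2 (fz n' m' ps1)
      + (pairing ?IJ' (fz n' m' ps2) p1 + pairing ?IJ' (fz n' m' ps2) (fz n' m' ps1))"
    by (simp add: e1 e2 pairing_add)
  moreover have "0 \<le> pairing ?IJ' p2 (fz n' m' ps1)"
    unfolding fz_def pairing_lsum_r by (rule sum_list_nonneg') (rule tb)
  moreover have "0 \<le> pairing ?IJ' (fz n' m' ps2) p1"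
    unfolding fz_def pairing_lsum_l by (rule sum_list_nonneg') (rule tc)
  moreover have "0 \<le> pairing ?IJ' (fz n' m' ps2) (fz n' m' ps1)"
    unfolding fz_def pairing_lsum_l pairing_lsum_r
    by (intro sum_list_nonneg') (rule td)
  ultimately show "0 \<le> pairing ?IJ' w2 w1" using ta by simp
next
  fix n1 m1 n2 m2 :: nat and G1 H1 G2 H2 :: "(nat \<Rightarrow> real) set" and A B :: "nat \<Rightarrow> nat \<Rightarrow> real"
  assume G1: "proper_cone {..<n1} G1" and H1: "proper_cone {..<m1} H1"
    and G2: "proper_cone {..<n2} G2" and H2: "proper_cone {..<m2} H2"
    and pA: "positive_map {..<n1} {..<n2} A G1 G2" and pB: "positive_map {..<m1} {..<m2} B H1 H2"
  let ?IJ = "{..<n} \<times> {..<m}" and ?I1 = "{..<n1} \<times> {..<m1}" and ?I2 = "{..<n2} \<times> {..<m2}"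
  show "positive_map ?I1 ?I2 (mat_tensor A B) (Fv S' n1 m1 G1 H1) (Fv S' n2 m2 G2 H2)"
    unfolding positive_map_def Fv_S'[OF G1 H1] Fv_S'[OF G2 H2]
  proof
    fix w assume "w \<in> Ext n1 m1 G1 H1"
    then obtain p ps where p: "p \<in> Fv M n1 m1 G1 H1"
      and ab: "\<forall>q\<in>set ps. positive_map {..<n} {..<n1} (fst q) G G1 \<and> positive_map {..<m} {..<m1} (snd q) H H1"
      and e: "w = (\<lambda>c. p c + fz n1 m1 ps c)" unfolding Ext_def by blast
    have a: "\<And>q. q \<in> set ps \<Longrightarrow> positive_map {..<n} {..<n1} (fst q) G G1" using ab by blast
    have b: "\<And>q. q \<in> set ps \<Longrightarrow> positive_map {..<m} {..<m1} (snd q) H H1" using ab by blast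
    define ps' where "ps' = map (\<lambda>q. (mmul {..<n1} A (fst q), mmul {..<m1} B (snd q))) ps"
    have "matapp ?I1 ?I2 (mat_tensor A B) p \<in> Fv M n2 m2 G2 H2"
      using valid_fun[OF vM G1 H1 G2 H2 pA pB] p unfolding positive_map_def by blast
    moreover have "matapp ?I1 ?I2 (mat_tensor A B) w = (\<lambda>c. matapp ?I1 ?I2 (mat_tensor A B) p c + fz n2 m2 ps' c)"
      unfolding e matapp_add fz_def matapp_lsum ps'_def lsum_map
      by (simp add: matapp_comp mmul_mat_tensor)
    moreover have "positive_map {..<n} {..<n2} (fst q) G G2" if qq: "q \<in> set ps'" for q
    proof -
      obtain q0 where q0: "q0 \<in> set ps" "q = (mmul {..<n1} A (fst q0), mmul {..<m1} B (snd q0))"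
        using qq unfolding ps'_def by auto
      show ?thesis using positive_comp[OF _ _ a[OF q0(1)] pA] q0(2) by simp
    qed
    moreover have "positive_map {..<m} {..<m2} (snd q) H H2" if qq: "q \<in> set ps'" for q
    proof -
      obtain q0 where q0: "q0 \<in> set ps" "q = (mmul {..<n1} A (fst q0), mmul {..<m1} B (snd q0))"
        using qq unfolding ps'_def by auto
      show ?thesis using positive_comp[OF _ _ b[OF q0(1)] pB] q0(2) by simp
    qed
    ultimately show "matapp ?I1 ?I2 (mat_tensor A B) w \<in> Ext n2 m2 G2 H2" by (auto intro!: ExtI)
  qed
qed

lemma z_in_S': "(n, m, G, H, z) \<in> S'"
proof -
  let ?IJ = "{..<n} \<times> {..<m}"
  have zsp: "z \<in> space ?IJ" using zQ by (auto simp: dual_cone_def)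
  have Pne: "Fv M n m G H \<noteq> {}"
  proof -
    obtain g h where "g \<in> G" "h \<in> H" using proper_basic(4)[OF G] proper_basic(4)[OF H] by blast
    then show ?thesis using valid_min[OF vM G H] tensor_in_min by blast
  qed
  have 0: "(\<lambda>c. 0) \<in> Fv M n m G H" by (rule cvx_zero[OF valid_cvx[OF vM G H] Pne])
  have "fz n m [(idm, idm)] = z"
    by (simp add: fz_def lsum_Cons lsum_Nil mat_tensor_idm matapp_idm[OF _ zsp])
  then have "z = (\<lambda>c. 0 + fz n m [(idm, idm)] c)" by simp
  moreover have "(\<lambda>c. 0 + fz n m [(idm, idm)] c) \<in> Ext n m G H"
  proof (rule ExtI[OF 0])
    show "positive_map {..<n} {..<n} (fst q) G G" if "q \<in> set [(idm, idm)]" for q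
      using that proper_basic(1)[OF G] by (auto intro!: positive_idm)
    show "positive_map {..<m} {..<m} (snd q) H H" if "q \<in> set [(idm, idm)]" for q
      using that proper_basic(1)[OF H] by (auto intro!: positive_idm)
  qed
  ultimately show ?thesis using G H by (auto simp: S'_def)
qed

lemma M_sub_S': "M \<subseteq> S'"
  by (auto simp: S'_def)

end


lemma maximal_selfdual:
  assumes vM: "valid M" and mx: "\<forall>X. valid X \<and> M \<subseteq> X \<longrightarrow> X = M"
    and G: "proper_cone {..<n} G" and H: "proper_cone {..<m} H"
  shows "Fv M n m G H = dual_cone ({..<n} \<times> {..<m}) (Fv M n m (dl n G) (dl m H))"
proof
  let ?IJ = "{..<n} \<times> {..<m}"
  let ?P = "Fv M n m G H" and ?Q = "Fv M n m (dl n G) (dl m H)"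
  have dG: "proper_cone {..<n} (dl n G)" by (rule dl_proper[OF G])
  have dH: "proper_cone {..<m} (dl m H)" by (rule dl_proper[OF H])
  show PQ: "?P \<subseteq> dual_cone ?IJ ?Q"
  proof
    fix x assume x: "x \<in> ?P"
    have "0 \<le> pairing ?IJ x w" if "w \<in> ?Q" for w
      using valid_ssd[OF vM G H x that] by (simp add: pairing_comm)
    moreover have "x \<in> space ?IJ" using valid_sp[OF vM G H] x by blast
    ultimately show "x \<in> dual_cone ?IJ ?Q" by (auto simp: dual_cone_def)
  qed
  show "dual_cone ?IJ ?Q \<subseteq> ?P"
  proof
    fix y assume yQ: "y \<in> dual_cone ?IJ ?Q"
    show "y \<in> ?P"
    proof (rule ccontr)
      assume yP: "y \<notin> ?P"
      have minQ: "min_tensor (dual_cone {..<n} G) (dual_cone {..<m} H) \<subseteq> ?Q"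
        using valid_min[OF vM dG dH] by (simp add: dl_def)
      have funQ: "positive_map ?IJ ?IJ (mat_tensor A B) ?P ?Q"
        if "positive_map {..<n} {..<n} A G (dual_cone {..<n} G)"
           "positive_map {..<m} {..<m} B H (dual_cone {..<m} H)" for A B
        using valid_fun[OF vM G H dG dH] that by (simp add: dl_def)
      obtain z where zQ: "z \<in> dual_cone ?IJ ?Q" and zP: "z \<notin> ?P"
        and Cz: "\<forall>A B. positive_map {..<n} {..<n} A G (dual_cone {..<n} G) \<and>
            positive_map {..<m} {..<m} B H (dual_cone {..<m} H) \<longrightarrow>
       0 \<le> pairing ?IJ z (matapp ?IJ ?IJ (mat_tensor A B) z)"
        using construct_z[OF G H maximal_closed[OF vM mx] valid_cvx[OF vM G H] valid_sp[OF vM G H]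
            valid_min[OF vM G H] PQ minQ funQ yQ yP] by blast
      have Cz': "0 \<le> pairing ?IJ z (matapp ?IJ ?IJ (mat_tensor A B) z)"
        if "positive_map {..<n} {..<n} A G (dl n G)" "positive_map {..<m} {..<m} B H (dl m H)" for A B
        using Cz that by (simp add: dl_def)
      have "valid (S' M n m G H z)" by (rule valid_S'[OF vM G H zQ Cz'])
      moreover have "M \<subseteq> S' M n m G H z" by (rule M_sub_S'[OF vM G H zQ Cz'])
      ultimately have "S' M n m G H z = M" using mx by blast
      moreover have "(n, m, G, H, z) \<in> S' M n m G H z" by (rule z_in_S'[OF vM G H zQ Cz'])
      ultimately have "z \<in> ?P" by (simp add: Fv_def)
      then show False using zP by simp
    qed
  qed
qed

theorem corollary3p3:
  shows "\<exists>T :: nat \<Rightarrow> nat \<Rightarrow> (nat \<Rightarrow> real) set \<Rightarrow> (nat \<Rightarrow> real) set \<Rightarrow> (nat \<times> nat \<Rightarrow> real) set.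
    (\<forall>n m G H. proper_cone {..<n} G \<and> proper_cone {..<m} H \<longrightarrow>
        proper_cone ({..<n} \<times> {..<m}) (T n m G H)) \<and>
    (\<forall>n1 m1 n2 m2 G1 H1 G2 H2 M N.
        proper_cone {..<n1} G1 \<and> proper_cone {..<m1} H1 \<and>
        proper_cone {..<n2} G2 \<and> proper_cone {..<m2} H2 \<and>
        positive_map {..<n1} {..<n2} M G1 G2 \<and> positive_map {..<m1} {..<m2} N H1 H2 \<longrightarrow>
        positive_map ({..<n1} \<times> {..<m1}) ({..<n2} \<times> {..<m2}) (mat_tensor M N)
          (T n1 m1 G1 H1) (T n2 m2 G2 H2)) \<and>
    (\<forall>n m G H. proper_cone {..<n} G \<and> proper_cone {..<m} H \<longrightarrow>
        dual_cone ({..<n} \<times> {..<m}) (T n m G H)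
          = T n m (dual_cone {..<n} G) (dual_cone {..<m} H)) \<and>
    (\<forall>n m G H. proper_cone {..<n} G \<and> proper_cone {..<m} H \<longrightarrow>
        min_tensor G H \<subseteq> T n m G H \<and> T n m G H \<subseteq> max_tensor {..<n} {..<m} G H)"
proof -
  obtain M where vM: "valid M" and mx: "\<forall>X. valid X \<and> M \<subseteq> X \<longrightarrow> X = M"
    using exists_maximal by blast
  have tensQ: "0 \<le> pairing ({..<n} \<times> {..<m}) (tensor l l') x"
    if G: "proper_cone {..<n} G" and H: "proper_cone {..<m} H" and x: "x \<in> Fv M n m G H"
      and l: "l \<in> dual_cone {..<n} G" and l': "l' \<in> dual_cone {..<m} H" for n m G H x l l'
  proof -
    have "tensor l l' \<in> Fv M n m (dl n G) (dl m H)"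
      using valid_min[OF vM dl_proper[OF G] dl_proper[OF H]] tensor_in_min[OF l l']
      by (auto simp: dl_def)
    then show ?thesis by (rule valid_ssd[OF vM G H x])
  qed
  show ?thesis
  proof (intro exI[of _ "Fv M"] conjI allI impI)
    fix n m :: nat and G H :: "(nat \<Rightarrow> real) set"
    assume GH: "proper_cone {..<n} G \<and> proper_cone {..<m} H"
    then have G: "proper_cone {..<n} G" and H: "proper_cone {..<m} H" by auto
    let ?IJ = "{..<n} \<times> {..<m}" and ?P = "Fv M n m G H"
    have cvP: "cvx ?P" by (rule valid_cvx[OF vM G H])
    have spP: "?P \<subseteq> space ?IJ" by (rule valid_sp[OF vM G H])
    show "proper_cone ?IJ ?P"
      unfolding proper_cone_def
    proof (intro conjI)
      show "?P \<subseteq> space ?IJ" by (rule spP)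
      show "closed ?P" by (rule maximal_closed[OF vM mx])
      show "\<forall>x\<in>?P. \<forall>c::real. c \<ge> 0 \<longrightarrow> (\<lambda>i. c * x i) \<in> ?P" using cvP by (auto simp: cvx_def)
      show "\<forall>x\<in>?P. \<forall>y\<in>?P. (\<lambda>i. x i + y i) \<in> ?P" using cvP by (auto simp: cvx_def)
      show "\<forall>x\<in>?P. (\<lambda>i. - x i) \<in> ?P \<longrightarrow> x = (\<lambda>i. 0)"
      proof (intro ballI impI)
        fix x assume x: "x \<in> ?P" and mx': "(\<lambda>i. - x i) \<in> ?P"
        have dG: "proper_cone {..<n} (dual_cone {..<n} G)" by (rule dual_proper[OF _ G]) simp
        have dH: "proper_cone {..<m} (dual_cone {..<m} H)" by (rule dual_proper[OF _ H]) simp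
        obtain l0 dl0 where l0: "dl0 > 0"
          and lb: "\<forall>u\<in>space {..<n}. (\<forall>i\<in>{..<n}. \<bar>u i\<bar> \<le> dl0) \<longrightarrow> (\<lambda>i. l0 i + u i) \<in> dual_cone {..<n} G"
          using proper_ball[OF dG] by blast
        obtain k0 dk0 where k0: "dk0 > 0"
          and kb: "\<forall>u\<in>space {..<m}. (\<forall>j\<in>{..<m}. \<bar>u j\<bar> \<le> dk0) \<longrightarrow> (\<lambda>j. k0 j + u j) \<in> dual_cone {..<m} H"
          using proper_ball[OF dH] by blast
        define d where "d = min dl0 dk0"
        have d: "d > 0" using l0 k0 by (simp add: d_def)
        have lb': "\<forall>u\<in>space {..<n}. (\<forall>i\<in>{..<n}. \<bar>u i\<bar> \<le> d) \<longrightarrow> (\<lambda>i. l0 i + u i) \<in> dual_cone {..<n} G"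
          using lb by (auto simp: d_def)
        have kb': "\<forall>u\<in>space {..<m}. (\<forall>j\<in>{..<m}. \<bar>u j\<bar> \<le> d) \<longrightarrow> (\<lambda>j. k0 j + u j) \<in> dual_cone {..<m} H"
          using kb by (auto simp: d_def)
        have "x c = 0" if c: "c \<in> ?IJ" for c
        proof -
          have "d^2 * \<bar>x c\<bar> \<le> pairing ?IJ (tensor l0 k0) x"
            by (rule fact3[OF _ _ d lb' kb' _ c]) (use tensQ[OF G H x] in auto)
          moreover have "d^2 * \<bar>- x c\<bar> \<le> pairing ?IJ (tensor l0 k0) (\<lambda>i. - x i)"
            by (rule fact3[OF _ _ d lb' kb' _ c]) (use tensQ[OF G H mx'] in auto)
          moreover have "pairing ?IJ (tensor l0 k0) (\<lambda>i. - x i) = - pairing ?IJ (tensor l0 k0) x"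
            using pairing_scale(2)[of ?IJ "tensor l0 k0" "-1" x] by simp
          ultimately have "d^2 * \<bar>x c\<bar> \<le> 0" by simp
          moreover have "d^2 > 0" using d by simp
          ultimately show ?thesis by (simp add: mult_le_0_iff)
        qed
        moreover have "x \<in> space ?IJ" using spP x by blast
        ultimately show "x = (\<lambda>i. 0)" by (intro space_eqI[OF _ zero_space]) auto
      qed
      show "\<exists>x\<in>?P. \<exists>e>0. \<forall>y\<in>space ?IJ. (\<forall>i\<in>?IJ. \<bar>y i - x i\<bar> < e) \<longrightarrow> y \<in> ?P"
      proof -
        obtain x r where x: "x \<in> ?P" "r > 0"
          and xb: "\<forall>u\<in>space ?IJ. (\<forall>c\<in>?IJ. \<bar>u c\<bar> \<le> r) \<longrightarrow> (\<lambda>c. x c + u c) \<in> ?P"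
          using interior_min[OF _ _ G H cvP valid_min[OF vM G H]] by auto
        have xsp: "x \<in> space ?IJ" using spP x by blast
        show ?thesis
        proof (intro bexI[OF _ x(1)] exI[of _ r] conjI ballI impI x(2))
          fix y assume y: "y \<in> space ?IJ" "\<forall>i\<in>?IJ. \<bar>y i - x i\<bar> < r"
          have "(\<lambda>c. x c + (y c - x c)) \<in> ?P"
            using xb[rule_format, of "\<lambda>c. y c - x c"] y xsp by (auto simp: space_def less_imp_le)
          then show "y \<in> ?P" by simp
        qed
      qed
    qed
  next
    fix n1 m1 n2 m2 :: nat and G1 H1 G2 H2 :: "(nat \<Rightarrow> real) set" and M' N :: "nat \<Rightarrow> nat \<Rightarrow> real"
    assume "proper_cone {..<n1} G1 \<and> proper_cone {..<m1} H1 \<and>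
        proper_cone {..<n2} G2 \<and> proper_cone {..<m2} H2 \<and>
        positive_map {..<n1} {..<n2} M' G1 G2 \<and> positive_map {..<m1} {..<m2} N H1 H2"
    then show "positive_map ({..<n1} \<times> {..<m1}) ({..<n2} \<times> {..<m2}) (mat_tensor M' N)
          (Fv M n1 m1 G1 H1) (Fv M n2 m2 G2 H2)"
      using valid_fun[OF vM] by blast
  next
    fix n m :: nat and G H :: "(nat \<Rightarrow> real) set"
    assume GH: "proper_cone {..<n} G \<and> proper_cone {..<m} H"
    then have G: "proper_cone {..<n} G" and H: "proper_cone {..<m} H" by auto
    have dG: "proper_cone {..<n} (dl n G)" by (rule dl_proper[OF G])
    have dH: "proper_cone {..<m} (dl m H)" by (rule dl_proper[OF H])
    have "dl n (dl n G) = G"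
      unfolding dl_def using bipolar[OF _ proper_basic[OF G]] by simp
    moreover have "dl m (dl m H) = H"
      unfolding dl_def using bipolar[OF _ proper_basic[OF H]] by simp
    ultimately have "Fv M n m (dl n G) (dl m H) = dual_cone ({..<n} \<times> {..<m}) (Fv M n m G H)"
      using maximal_selfdual[OF vM mx dG dH] by simp
    then show "dual_cone ({..<n} \<times> {..<m}) (Fv M n m G H) = Fv M n m (dual_cone {..<n} G) (dual_cone {..<m} H)"
      by (simp add: dl_def)
  next
    fix n m :: nat and G H :: "(nat \<Rightarrow> real) set"
    assume GH: "proper_cone {..<n} G \<and> proper_cone {..<m} H"
    then have G: "proper_cone {..<n} G" and H: "proper_cone {..<m} H" by auto
    show "min_tensor G H \<subseteq> Fv M n m G H" by (rule valid_min[OF vM G H])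
    show "Fv M n m G H \<subseteq> max_tensor {..<n} {..<m} G H"
    proof
      fix x assume x: "x \<in> Fv M n m G H"
      then have "x \<in> space ({..<n} \<times> {..<m})" using valid_sp[OF vM G H] by blast
      then show "x \<in> max_tensor {..<n} {..<m} G H"
        using tensQ[OF G H x] by (auto simp: max_tensor_def)
    qed
  qed
qed


end
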